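(* Let $d\ge1$ and let $u\in C^1([0,1];\ell^2((h\mathbb Z)^d))$ be a solution to $\partial_tu_j=\Delta_{\mathrm d}u_j+V_ju_j$ on $(h\mathbb Z)^d\times[0,1]$ with $V$ real-valued and bounded, and assume that for a fixed $\mu>0$, $$h^d\sum_{j\in\mathbb Z^d}\prod_{k=1}^d\frac{K_{j_k\mu}\big(\frac{2}{eh^2}\big)}{K_0\big(\frac{2}{eh^2}\big)}\big(|u_j(0)|^2+|u_j(1)|^2\big)<\infty .$$ Then there exists $h_0>0$ such that for $h\in(0,h_0)$ and $R>1$ satisfying $Rh\ge\frac{2}{e\mu}$, $$h^d\int_0^1\sum_{j\in\mathbb Z^d,\ R-2<|hj|<R+1}|u_j(t)|^2\,dt\le C\exp\Big(-\mu c_0\Big(\frac Rh\log(Rh)+\frac Rh\log\mu\Big)\Big)$$ for some positive constants $c_0$ and $C$ independent of $h$ and $R$.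
   Context: Lattice functions on $(h\mathbb Z)^d$ are indexed by $j\in\mathbb Z^d$ with $u_j(t)=u(hj,t)$; $\Delta_{\mathrm d}f_j:=h^{-2}\sum_{k=1}^d(f_{j+e_k}-2f_j+f_{j-e_k})$; $|\cdot|$ is the Euclidean norm. $K_\nu$ is the Macdonald function $K_\nu(z)=\int_0^\infty e^{-z\cosh s}\cosh(\nu s)\,ds$, $z>0$. *)

theory Defs
  imports "HOL-Analysis.Analysis"
begin

definition macdonaldK :: "real \<Rightarrow> real \<Rightarrow> real" where
  "macdonaldK \<nu> z = integral {0..} (\<lambda>s. exp (- z * cosh s) * cosh (\<nu> * s))"

definition lat_norm :: "int ^ 'd::finite \<Rightarrow> real" where
  "lat_norm j = sqrt (\<Sum>k\<in>UNIV. (real_of_int (j $ k))\<^sup>2)"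

definition disc_lap :: "real \<Rightarrow> (int ^ 'd::finite \<Rightarrow> complex) \<Rightarrow> int ^ 'd \<Rightarrow> complex" where
  "disc_lap h f j = (1 / complex_of_real (h\<^sup>2)) *
     (\<Sum>k\<in>UNIV. f (j + axis k 1) - 2 * f j + f (j - axis k 1))"

definition in_l2 :: "('i \<Rightarrow> complex) \<Rightarrow> bool" where
  "in_l2 f \<longleftrightarrow> (\<lambda>j. (cmod (f j))\<^sup>2) summable_on UNIV"

definition l2norm :: "('i \<Rightarrow> complex) \<Rightarrow> real" where
  "l2norm f = sqrt (infsum (\<lambda>j. (cmod (f j))\<^sup>2) UNIV)"

definition is_C1_l2_solution ::
  "real \<Rightarrow> (real \<Rightarrow> int ^ 'd::finite \<Rightarrow> real) \<Rightarrow> (real \<Rightarrow> int ^ 'd \<Rightarrow> complex) \<Rightarrow> bool" where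
  "is_C1_l2_solution h V u \<longleftrightarrow>
    (\<exists>u'. (\<forall>t\<in>{0..1}. in_l2 (u t) \<and> in_l2 (u' t))
      \<and> (\<forall>t\<in>{0..1}. ((\<lambda>s. l2norm (\<lambda>j. (u s j - u t j) / complex_of_real (s - t) - u' t j))
                        \<longlongrightarrow> 0) (at t within {0..1}))
      \<and> (\<forall>t\<in>{0..1}. ((\<lambda>s. l2norm (\<lambda>j. u' s j - u' t j)) \<longlongrightarrow> 0) (at t within {0..1}))
      \<and> (\<forall>t\<in>{0..1}. \<forall>j. u' t j = disc_lap h (u t) j + complex_of_real (V t j) * u t j))"

end

theory Submission
  imports Defs
begin



lemma cosh_le_exp_abs: "cosh (x::real) \<le> exp \<bar>x\<bar>"
  unfolding cosh_def by (cases "x \<ge> 0") (auto simp: divide_simps)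

lemma cosh_ge_sq4: "(s::real) \<ge> 0 \<Longrightarrow> s\<^sup>2 / 4 \<le> cosh s"
proof -
  assume s: "s \<ge> 0"
  have "1 + s + s\<^sup>2/2 \<le> exp s" by (rule exp_lower_Taylor_quadratic[OF s])
  moreover have "exp s / 2 \<le> cosh s" unfolding cosh_def by (simp add: divide_simps)
  ultimately show ?thesis using s by simp
qed

lemma macK_integrand_bound:
  fixes z s \<nu> :: real
  assumes z: "z > 0" and s: "s \<ge> 0"
  shows "\<bar>exp (- z * cosh s) * cosh (\<nu> * s)\<bar> \<le> exp ((\<bar>\<nu>\<bar>+1)\<^sup>2 / z) * exp (- s)"
proof -
  have c1: "cosh (\<nu> * s) \<le> exp (\<bar>\<nu>\<bar> * s)"
    using cosh_le_exp_abs[of "\<nu> * s"] s by (simp add: abs_mult)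
  have c2: "exp (- z * cosh s) \<le> exp (- z * (s\<^sup>2/4))"
    using cosh_ge_sq4[OF s] z by simp
  have q: "\<bar>\<nu>\<bar> * s - z * (s\<^sup>2/4) \<le> (\<bar>\<nu>\<bar>+1)\<^sup>2 / z - s"
  proof -
    have "0 \<le> ((\<bar>\<nu>\<bar> + 1) - z * s / 2)\<^sup>2" by simp
    hence "(\<bar>\<nu>\<bar>+1) * s - z*(s\<^sup>2/4) \<le> (\<bar>\<nu>\<bar>+1)\<^sup>2 / z"
      using z by (simp add: field_simps power2_eq_square)
    thus ?thesis by (simp add: algebra_simps)
  qed
  have "\<bar>exp (- z * cosh s) * cosh (\<nu> * s)\<bar> = exp (- z * cosh s) * cosh (\<nu> * s)" by simp
  also have "\<dots> \<le> exp (- z * (s\<^sup>2/4)) * exp (\<bar>\<nu>\<bar> * s)"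
    by (intro mult_mono c1 c2) auto
  also have "\<dots> = exp (\<bar>\<nu>\<bar> * s - z * (s\<^sup>2/4))" by (simp add: exp_add[symmetric])
  also have "\<dots> \<le> exp ((\<bar>\<nu>\<bar>+1)\<^sup>2 / z - s)" using q by simp
  also have "\<dots> = exp ((\<bar>\<nu>\<bar>+1)\<^sup>2 / z) * exp (- s)" by (simp add: exp_diff exp_minus field_simps)
  finally show ?thesis .
qed

lemma macK_integrable:
  fixes z c \<nu> :: real
  assumes z: "z > 0" and c: "c \<ge> 0"
  shows "(\<lambda>s. exp (- z * cosh s) * cosh (\<nu> * s)) integrable_on {c..}"
proof (rule measurable_bounded_by_integrable_imp_integrable_real[where g="\<lambda>s. exp ((\<bar>\<nu>\<bar>+1)\<^sup>2 / z) * exp (- s)"])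
  show "(\<lambda>s. exp (- z * cosh s) * cosh (\<nu> * s)) \<in> borel_measurable (lebesgue_on {c..})"
    by (intro continuous_imp_measurable_on_sets_lebesgue continuous_intros) auto
  show "(\<lambda>s. exp ((\<bar>\<nu>\<bar>+1)\<^sup>2 / z) * exp (- s)) integrable_on {c..}"
    using integrable_on_exp_minus_to_infinity[of 1 c, simplified] by simp
  show "\<bar>exp (- z * cosh s) * cosh (\<nu> * s)\<bar> \<le> exp ((\<bar>\<nu>\<bar>+1)\<^sup>2 / z) * exp (- s)" if "s \<in> {c..}" for s
    using macK_integrand_bound[OF z, of s \<nu>] that c by auto
qed auto

definition gK :: "real \<Rightarrow> real \<Rightarrow> real" where "gK z s = exp (- z * cosh s)"

lemma macK_lower_tail:
  fixes z a \<nu> :: real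
  assumes z: "z > 0" and a: "a > 0"
  shows "macdonaldK \<nu> z \<ge> cosh (\<nu> * a) * integral {a..} (gK z)"
proof -
  let ?f = "\<lambda>s. exp (- z * cosh s) * cosh (\<nu> * s)"
  have "integral {a..} ?f \<le> integral {0..} ?f"
    by (rule integral_subset_le) (use a z macK_integrable in auto)
  moreover have "integral {a..} (\<lambda>s. cosh (\<nu> * a) * gK z s) \<le> integral {a..} ?f"
  proof (rule integral_le)
    show "(\<lambda>s. cosh (\<nu> * a) * gK z s) integrable_on {a..}"
      using macK_integrable[OF z, of a 0] a unfolding gK_def by simp
    show "?f integrable_on {a..}" using macK_integrable[OF z, of a] a by auto
    show "cosh (\<nu> * a) * gK z s \<le> ?f s" if "s \<in> {a..}" for s
    proof -
      have "\<bar>\<nu> * a\<bar> \<le> \<bar>\<nu> * s\<bar>" using that a by (simp add: abs_mult mult_left_mono)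
      hence "cosh (\<nu> * a) \<le> cosh (\<nu> * s)"
        by (metis cosh_real_abs cosh_real_nonneg_le_iff abs_ge_zero)
      thus ?thesis unfolding gK_def by (simp add: mult.commute)
    qed
  qed
  ultimately show ?thesis unfolding macdonaldK_def by simp
qed

lemma macK0_split:
  fixes z a :: real
  assumes z: "z > 0" and a: "a > 0"
  shows "macdonaldK 0 z = integral {0..a} (gK z) + integral {a..} (gK z)"
proof -
  have i1: "gK z integrable_on {0..a}"
    unfolding gK_def by (intro integrable_continuous_interval continuous_intros)
  have i2: "gK z integrable_on {a..}"
    using macK_integrable[OF z, of a 0] a unfolding gK_def by auto
  have "(gK z has_integral (integral {0..a} (gK z) + integral {a..} (gK z))) ({0..a} \<union> {a..})"
    by (rule has_integral_Un) (use i1 i2 a in \<open>auto simp: integrable_integral max_def\<close>)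
  moreover have "{0..a} \<union> {a..} = {0::real..}" using a by auto
  ultimately have "integral {0..} (gK z) = integral {0..a} (gK z) + integral {a..} (gK z)"
    by (metis integral_unique)
  thus ?thesis unfolding macdonaldK_def gK_def by simp
qed

lemma gK_int_head: "z > 0 \<Longrightarrow> a > 0 \<Longrightarrow> integral {0..a} (gK z) \<le> a * exp (- z)"
proof -
  assume z: "z > 0" and a: "a > 0"
  have "integral {0..a} (gK z) \<le> integral {0..a} (\<lambda>s. exp (- z))"
  proof (rule integral_le)
    show "gK z integrable_on {0..a}"
      unfolding gK_def by (intro integrable_continuous_interval continuous_intros)
    show "gK z s \<le> exp (- z)" for s
      unfolding gK_def using cosh_real_ge_1[of s] z by simp
  qed auto
  thus ?thesis using a by simp
qed

lemma gK_int_tail: "z > 0 \<Longrightarrow> a > 0 \<Longrightarrow> integral {a..} (gK z) \<ge> a * exp (- z * cosh (2*a))"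
proof -
  assume z: "z > 0" and a: "a > 0"
  have "integral {a..2*a} (\<lambda>s. exp (- z * cosh (2*a))) \<le> integral {a..2*a} (gK z)"
  proof (rule integral_le)
    show "gK z integrable_on {a..2*a}"
      unfolding gK_def by (intro integrable_continuous_interval continuous_intros)
    show "exp (- z * cosh (2*a)) \<le> gK z s" if "s \<in> {a..2*a}" for s
      unfolding gK_def using that a z by (simp add: cosh_real_nonneg_le_iff)
  qed auto
  also have "\<dots> \<le> integral {a..} (gK z)"
  proof (rule integral_subset_le)
    show "gK z integrable_on {a..2*a}"
      unfolding gK_def by (intro integrable_continuous_interval continuous_intros)
    show "gK z integrable_on {a..}"
      using macK_integrable[OF z, of a 0] a unfolding gK_def by simp
  qed (auto simp: gK_def)
  finally show ?thesis using a by simp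
qed

lemma macK_ratio:
  fixes z a \<nu> :: real
  assumes z: "z > 0" and a: "a > 0"
  shows "cosh (\<nu> * a) * exp (- z * (cosh (2*a) - 1)) / 2 \<le> macdonaldK \<nu> z / macdonaldK 0 z"
proof -
  define I where "I = integral {0..a} (gK z)"
  define T where "T = integral {a..} (gK z)"
  have I0: "I \<ge> 0" unfolding I_def gK_def
    by (intro integral_nonneg integrable_continuous_interval continuous_intros) auto
  have Ib: "I \<le> a * exp (- z)" unfolding I_def using gK_int_head z a by auto
  have Tb: "T \<ge> a * exp (- z * cosh (2*a))" unfolding T_def using gK_int_tail z a by auto
  have bpos: "a * exp (- z * cosh (2*a)) > 0" using a by simp
  have K0: "macdonaldK 0 z = I + T" unfolding I_def T_def using macK0_split[OF z a] by auto
  have Kn: "macdonaldK \<nu> z \<ge> cosh (\<nu> * a) * T" unfolding T_def using macK_lower_tail z a by auto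
  have le1: "exp (- z * cosh (2*a)) \<le> exp (- z)"
    using cosh_real_ge_1[of "2*a"] z by simp
  define b where "b = a * exp (- z * cosh (2*a))"
  define c where "c = a * exp (- z)"
  have bc: "b \<le> c" unfolding b_def c_def using le1 a by simp
  have bpos': "b > 0" unfolding b_def using bpos .
  have Tpos: "T > 0" using Tb bpos by linarith
  have key: "exp (- z * (cosh (2*a) - 1)) / 2 \<le> T / (I + T)"
  proof -
    have "exp (- z * (cosh (2*a) - 1)) / 2 = b / (2 * c)"
      unfolding b_def c_def using a by (simp add: algebra_simps exp_minus field_simps exp_diff exp_add[symmetric])
    also have "\<dots> \<le> b / (c + b)"
      using bc bpos' by (intro divide_left_mono) auto
    also have "\<dots> \<le> T / (c + T)"
      proof -
      have c0: "c \<ge> 0" using bc bpos' by simp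
      have "b * c \<le> T * c" using Tb c0 unfolding b_def[symmetric] by (rule mult_right_mono)
      hence "b * (c + T) \<le> T * (c + b)" by (simp add: algebra_simps)
      thus ?thesis using bpos' Tpos c0 by (simp add: divide_simps)
    qed
    also have "\<dots> \<le> T / (I + T)"
      using Ib I0 Tpos unfolding c_def[symmetric] by (intro divide_left_mono) auto
    finally show ?thesis .
  qed
  have B: "cosh (\<nu> * a) * T / (I + T) \<le> macdonaldK \<nu> z / macdonaldK 0 z"
    using Kn K0 I0 Tpos by (simp add: divide_right_mono)
  have A: "cosh (\<nu> * a) * exp (- z * (cosh (2*a) - 1)) / 2 \<le> cosh (\<nu> * a) * T / (I + T)"
    using mult_left_mono[OF key, of "cosh (\<nu> * a)"] by simp
  show ?thesis using order_trans[OF A B] .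
qed




lemma ln_concave_aux:
  fixes y \<epsilon> :: real assumes y: "y > 0" and e: "0 < \<epsilon>" "\<epsilon> \<le> 1"
  shows "\<epsilon> * ln y \<le> ln (1 + \<epsilon> * y)"
proof -
  have "exp ((1 - \<epsilon>) * 0 + \<epsilon> * ln y) \<le> (1 - \<epsilon>) * exp 0 + \<epsilon> * exp (ln y)"
    using convex_onD[OF exp_convex, of \<epsilon> 0 "ln y"] e by auto
  hence "exp (\<epsilon> * ln y) \<le> 1 + \<epsilon> * y" using y e by simp
  thus ?thesis using y e by (subst ln_ge_iff) (auto intro: add_pos_nonneg)
qed

lemma cosh_ln1: fixes x :: real assumes "x \<ge> 0" shows "cosh (ln (1 + x)) - 1 = x\<^sup>2 / (2 * (1 + x))"
  using assms by (simp add: cosh_ln_real field_simps power2_eq_square)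

lemma ln1_lower: fixes x :: real assumes "x \<ge> 0" shows "x / (1 + x) \<le> ln (1 + x)"
proof -
  have "ln (inverse (1 + x)) \<le> inverse (1 + x) - 1" using assms by (intro ln_le_minus_one) auto
  moreover have "ln (inverse (1 + x)) = - ln (1 + x)" using assms by (simp add: ln_inverse)
  ultimately have "- ln (1 + x) \<le> inverse (1 + x) - 1" by simp
  moreover have "inverse (1 + x) - 1 = - (x / (1 + x))" using assms by (simp add: field_simps)
  ultimately show ?thesis by simp
qed

lemma final_ineq:
  fixes \<mu> dd y s lam H :: real
  defines "m \<equiv> min 1 (\<mu> / 2)"
  defines "a \<equiv> m / (2 * \<mu>)"
  defines "\<epsilon> \<equiv> min 1 (a / (3 * dd))"
  assumes mu: "\<mu> > 0" and dd: "dd \<ge> 1" and y: "y > 0"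
    and s: "s = ln (1 + \<epsilon> * y)" and lam: "lam = m * s"
    and H: "H \<ge> y / (2 * \<mu>)"
  shows "lam * H - 2 * dd * (cosh lam - 1) - (2 * dd / exp 1) * (cosh (2 * lam / \<mu>) - 1)
          \<ge> (a * \<epsilon> / 2) * (y * ln y)"
proof -
  have m0: "m > 0" "m \<le> 1" "m \<le> \<mu>/2" using mu unfolding m_def by auto
  have a0: "a > 0" unfolding a_def using m0 mu by simp
  have e0: "\<epsilon> > 0" "\<epsilon> \<le> 1" "\<epsilon> \<le> a / (3*dd)" unfolding \<epsilon>_def using a0 dd by auto
  have ey: "\<epsilon> * y > 0" using e0 y by simp
  have s0: "s \<ge> 0" using s ey by simp
  have lam0: "lam \<ge> 0" using lam m0 s0 by simp
  have c1: "cosh lam \<le> cosh s"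
    using lam m0 s0 by (subst cosh_real_nonneg_le_iff) (auto intro: mult_left_le_one_le)
  have c2: "cosh (2 * lam / \<mu>) \<le> cosh s"
  proof -
    have "2 * lam / \<mu> = (2 * m / \<mu>) * s" using lam by simp
    moreover have "2 * m / \<mu> \<le> 1" using m0 mu by (simp add: divide_simps)
    ultimately have "2 * lam / \<mu> \<le> s" using mult_right_mono[of "2 * m / \<mu>" 1 s] s0 lam by (simp add: mult.assoc)
    moreover have "2 * lam / \<mu> \<ge> 0" using lam0 mu by simp
    ultimately show ?thesis using s0 by (subst cosh_real_nonneg_le_iff) auto
  qed
  have ecoef: "2 * dd / exp 1 \<le> dd"
    using dd exp_ge_add_one_self[of 1] by (simp add: divide_simps)
  have loss: "2 * dd * (cosh lam - 1) + (2 * dd / exp 1) * (cosh (2 * lam / \<mu>) - 1) \<le> 3 * dd * (cosh s - 1)"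
  proof -
    have "2 * dd * (cosh lam - 1) \<le> 2 * dd * (cosh s - 1)" using c1 dd by simp
    moreover have "(2 * dd / exp 1) * (cosh (2 * lam / \<mu>) - 1) \<le> dd * (cosh s - 1)"
      using mult_mono[OF ecoef, of "cosh (2 * lam / \<mu>) - 1" "cosh s - 1"] c2 cosh_real_ge_1[of s]
        cosh_real_ge_1[of "2 * lam / \<mu>"] dd by simp
    ultimately show ?thesis by simp
  qed
  have cs: "cosh s - 1 = (\<epsilon> * y)\<^sup>2 / (2 * (1 + \<epsilon> * y))" using s cosh_ln1[of "\<epsilon> * y"] ey by simp
  have sl: "\<epsilon> * y / (1 + \<epsilon> * y) \<le> s" using s ln1_lower[of "\<epsilon> * y"] ey by simp
  have gain: "lam * H \<ge> a * s * y"
  proof -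
    have "m * s * (y / (2 * \<mu>)) \<le> m * s * H" using H m0 s0 by (intro mult_left_mono) auto
    hence "lam * H \<ge> m * s * (y / (2 * \<mu>))" using lam by simp
    thus ?thesis unfolding a_def by (simp add: field_simps)
  qed
  have half1: "a * s * y / 2 \<ge> 3 * dd * (cosh s - 1)"
  proof -
    have "3 * dd * (cosh s - 1) = (3 * dd * \<epsilon>) * (y * (\<epsilon> * y / (1 + \<epsilon> * y))) / 2"
      unfolding cs using ey by (simp add: field_simps power2_eq_square)
    also have "\<dots> \<le> a * (y * (\<epsilon> * y / (1 + \<epsilon> * y))) / 2"
      using e0 dd ey y by (intro divide_right_mono mult_right_mono) (auto simp: field_simps)
    also have "\<dots> \<le> a * (y * s) / 2"
      using sl a0 y by (intro divide_right_mono mult_left_mono) auto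
    finally show ?thesis by (simp add: mult.assoc mult.commute mult.left_commute)
  qed
  have half2: "a * s * y / 2 \<ge> (a * \<epsilon> / 2) * (y * ln y)"
  proof -
    have "\<epsilon> * ln y \<le> s" using s ln_concave_aux[OF y e0(1) e0(2)] by simp
    hence "a * y * (\<epsilon> * ln y) \<le> a * y * s" using a0 y by (intro mult_left_mono) auto
    thus ?thesis by (simp add: algebra_simps)
  qed
  show ?thesis using gain half1 half2 loss by linarith
qed




definition NN :: "('i \<Rightarrow> complex) \<Rightarrow> real" where
  "NN f = infsum (\<lambda>j. (cmod (f j))\<^sup>2) UNIV"

lemma l2norm_NN: "l2norm f = sqrt (NN f)" unfolding l2norm_def NN_def ..

lemma NN_nonneg: "NN f \<ge> 0" unfolding NN_def by (intro infsum_nonneg) auto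

lemma real_summable_bound:
  fixes F G :: "'i \<Rightarrow> real"
  assumes "G summable_on A" "\<And>j. j \<in> A \<Longrightarrow> \<bar>F j\<bar> \<le> G j"
  shows "F summable_on A"
proof -
  have "(\<lambda>x. \<bar>F x\<bar>) summable_on A"
    by (rule summable_on_comparison_test[OF assms(1)]) (use assms(2) in auto)
  hence "(\<lambda>x. norm (F x)) summable_on A" by simp
  thus ?thesis using summable_on_iff_abs_summable_on_real by blast
qed

lemma real_infsum_abs_bound:
  fixes F G :: "'i \<Rightarrow> real"
  assumes "G summable_on A" "\<And>j. j \<in> A \<Longrightarrow> \<bar>F j\<bar> \<le> G j"
  shows "\<bar>infsum F A\<bar> \<le> infsum G A"
proof -
  have F: "F summable_on A" by (rule real_summable_bound[OF assms])
  have "infsum F A \<le> infsum G A" by (rule infsum_mono[OF F assms(1)]) (use assms(2) in force)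
  moreover have "infsum (\<lambda>j. - G j) A \<le> infsum F A"
    by (rule infsum_mono) (use assms F summable_on_uminus in \<open>force+\<close>)
  ultimately show ?thesis by (simp add: infsum_uminus)
qed

lemma cmod_add_sq_le: "(cmod (a + b))\<^sup>2 \<le> 2 * (cmod a)\<^sup>2 + 2 * (cmod b)\<^sup>2"
proof -
  have "cmod (a + b) \<le> cmod a + cmod b" by (rule norm_triangle_ineq)
  hence "(cmod (a + b))\<^sup>2 \<le> (cmod a + cmod b)\<^sup>2" by (simp add: power_mono)
  also have "\<dots> \<le> 2 * (cmod a)\<^sup>2 + 2 * (cmod b)\<^sup>2"
    using sum_squares_bound[of "cmod a" "cmod b"] by (simp add: power2_sum)
  finally show ?thesis .
qed

lemma in_l2_lin:
  assumes "in_l2 f" "in_l2 g"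
  shows "in_l2 (\<lambda>j. a * f j + b * g j)"
  unfolding in_l2_def
proof (rule summable_on_comparison_test)
  show "(\<lambda>j. 2 * (cmod a)\<^sup>2 * (cmod (f j))\<^sup>2 + 2 * (cmod b)\<^sup>2 * (cmod (g j))\<^sup>2) summable_on UNIV"
    using assms unfolding in_l2_def
    by (intro summable_on_add summable_on_cmult_right) auto
  show "(cmod (a * f j + b * g j))\<^sup>2 \<le> 2 * (cmod a)\<^sup>2 * (cmod (f j))\<^sup>2 + 2 * (cmod b)\<^sup>2 * (cmod (g j))\<^sup>2" for j
    using cmod_add_sq_le[of "a * f j" "b * g j"] by (simp add: norm_mult power_mult_distrib)
qed auto

lemma re_cnj_le: "2 * Re (cnj a * b) \<le> (cmod a)\<^sup>2 + (cmod b)\<^sup>2"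
proof -
  have "0 \<le> (Re a - Re b)\<^sup>2 + (Im a - Im b)\<^sup>2" by simp
  moreover have "(cmod a)\<^sup>2 + (cmod b)\<^sup>2 - 2 * Re (cnj a * b) = (Re a - Re b)\<^sup>2 + (Im a - Im b)\<^sup>2"
    by (simp add: cmod_power2 power2_diff algebra_simps)
  ultimately show ?thesis by linarith
qed

lemma abs_re_cnj_le: "\<bar>Re (cnj a * b)\<bar> \<le> cmod a * cmod b"
  using abs_Re_le_cmod[of "cnj a * b"] by (simp add: norm_mult)

lemma prod_le_amgm:
  fixes x y \<alpha> :: real assumes "\<alpha> > 0"
  shows "x * y \<le> (\<alpha> * x\<^sup>2 + y\<^sup>2 / \<alpha>) / 2"
proof -
  have "0 \<le> (\<alpha> * x - y)\<^sup>2 / \<alpha>" using assms by simp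
  also have "(\<alpha> * x - y)\<^sup>2 / \<alpha> = \<alpha> * x\<^sup>2 + y\<^sup>2 / \<alpha> - 2 * x * y"
    using assms by (simp add: field_simps power2_eq_square)
  finally show ?thesis by simp
qed

lemma prod_summable:
  assumes "in_l2 f" "in_l2 g"
  shows "(\<lambda>j. cmod (f j) * cmod (g j)) summable_on UNIV"
proof (rule summable_on_comparison_test)
  show "(\<lambda>j. (cmod (f j))\<^sup>2 + (cmod (g j))\<^sup>2) summable_on UNIV"
    using assms unfolding in_l2_def by (intro summable_on_add) auto
  show "cmod (f j) * cmod (g j) \<le> (cmod (f j))\<^sup>2 + (cmod (g j))\<^sup>2" for j
  proof -
    have "cmod (f j) * cmod (g j) * 2 \<le> (cmod (f j))\<^sup>2 + (cmod (g j))\<^sup>2"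
      using prod_le_amgm[of 1 "cmod (f j)" "cmod (g j)"] by simp
    moreover have "0 \<le> cmod (f j) * cmod (g j)" by simp
    ultimately show ?thesis by linarith
  qed
qed auto

lemma sqrt_bound_from_amgm:
  fixes X a b :: real
  assumes a: "a \<ge> 0" and b: "b \<ge> 0" and H: "\<And>\<alpha>. \<alpha> > 0 \<Longrightarrow> X \<le> (\<alpha> * a + b / \<alpha>) / 2"
  shows "X \<le> sqrt a * sqrt b"
proof (cases "a > 0 \<and> b > 0")
  case True
  define \<alpha> where "\<alpha> = sqrt b / sqrt a"
  have "\<alpha> > 0" using True unfolding \<alpha>_def by simp
  from H[OF this] have "X \<le> (\<alpha> * a + b / \<alpha>) / 2" .
  also have "\<alpha> * a = sqrt a * sqrt b" unfolding \<alpha>_def using True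
    by (simp add: field_simps)
  also have "b / \<alpha> = sqrt a * sqrt b" unfolding \<alpha>_def using True
    by (simp add: field_simps)
  finally show ?thesis by simp
next
  case False
  hence z: "a = 0 \<or> b = 0" using a b by auto
  show ?thesis
  proof (rule ccontr)
    assume "\<not> X \<le> sqrt a * sqrt b"
    hence X: "X > 0" using z by auto
    show False
    proof (cases "a = 0")
      case True
      have "b / X \<ge> 0" using X b by simp
      hence "b / X + 1 > 0" by linarith
      from H[OF this] have "X \<le> (b / (b / X + 1)) / 2" using True by simp
      moreover have "b / (b / X + 1) = b * X / (b + X)" using X by (simp add: field_simps)
      ultimately have h1: "X \<le> (b * X / (b + X)) / 2" by simp
      have h2: "b * X / (b + X) \<le> X" using X b by (simp add: divide_simps mult_left_mono)
      define Y where "Y = b * X / (b + X)"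
      have "X \<le> Y / 2" "Y \<le> X" using h1 h2 unfolding Y_def by auto
      thus False using X by linarith
    next
      case False
      hence b0: "b = 0" using z by simp
      have h1: "X \<le> (X / (a + 1) * a) / 2" using H[of "X / (a + 1)"] b0 X a by simp
      have h2: "X / (a + 1) * a \<le> X" using X a by (simp add: divide_simps)
      define Y where "Y = X / (a + 1) * a"
      have "X \<le> Y / 2" "Y \<le> X" using h1 h2 unfolding Y_def by auto
      thus False using X by linarith
    qed
  qed
qed

lemma cauchy_schwarz_l2:
  assumes "in_l2 f" "in_l2 g"
  shows "infsum (\<lambda>j. cmod (f j) * cmod (g j)) UNIV \<le> sqrt (NN f) * sqrt (NN g)"
proof (rule sqrt_bound_from_amgm[OF NN_nonneg NN_nonneg])
  fix \<alpha> :: real assume a: "\<alpha> > 0"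
  have s1: "(\<lambda>j. (\<alpha> / 2) * (cmod (f j))\<^sup>2) summable_on UNIV"
    using assms unfolding in_l2_def by (intro summable_on_cmult_right) auto
  have s2: "(\<lambda>j. (1 / (2 * \<alpha>)) * (cmod (g j))\<^sup>2) summable_on UNIV"
    using assms unfolding in_l2_def by (intro summable_on_cmult_right) auto
  have "infsum (\<lambda>j. cmod (f j) * cmod (g j)) UNIV
        \<le> infsum (\<lambda>j. (\<alpha> / 2) * (cmod (f j))\<^sup>2 + (1 / (2 * \<alpha>)) * (cmod (g j))\<^sup>2) UNIV"
  proof (rule infsum_mono[OF prod_summable[OF assms]])
    show "(\<lambda>j. (\<alpha> / 2) * (cmod (f j))\<^sup>2 + (1 / (2 * \<alpha>)) * (cmod (g j))\<^sup>2) summable_on UNIV"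
      using s1 s2 by (rule summable_on_add)
    show "cmod (f j) * cmod (g j) \<le> (\<alpha> / 2) * (cmod (f j))\<^sup>2 + (1 / (2 * \<alpha>)) * (cmod (g j))\<^sup>2" for j
      using prod_le_amgm[OF a, of "cmod (f j)" "cmod (g j)"] a by (simp add: field_simps)
  qed
  also have "\<dots> = (\<alpha> / 2) * NN f + (1 / (2 * \<alpha>)) * NN g"
  proof -
    have e1: "infsum (\<lambda>j. (\<alpha> / 2) * (cmod (f j))\<^sup>2) UNIV = (\<alpha> / 2) * NN f"
      unfolding NN_def by (rule infsum_cmult_right) (use assms in \<open>simp add: in_l2_def\<close>)
    have e2: "infsum (\<lambda>j. (1 / (2 * \<alpha>)) * (cmod (g j))\<^sup>2) UNIV = (1 / (2 * \<alpha>)) * NN g"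
      unfolding NN_def by (rule infsum_cmult_right) (use assms in \<open>simp add: in_l2_def\<close>)
    show ?thesis using infsum_add[OF s1 s2] e1 e2 by linarith
  qed
  also have "\<dots> = (\<alpha> * NN f + NN g / \<alpha>) / 2" by (simp add: field_simps)
  finally show "infsum (\<lambda>j. cmod (f j) * cmod (g j)) UNIV \<le> (\<alpha> * NN f + NN g / \<alpha>) / 2" .
qed

lemma in_l2_cong: "in_l2 f \<Longrightarrow> (\<And>j. f j = g j) \<Longrightarrow> in_l2 g"
proof -
  assume "in_l2 f" "\<And>j. f j = g j"
  moreover have "f = g" using \<open>\<And>j. f j = g j\<close> by (rule ext)
  ultimately show ?thesis by simp
qed

lemma NN_eq_l2norm_sq: "NN f = (l2norm f)\<^sup>2"
  unfolding l2norm_NN using NN_nonneg[of f] by simp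

lemma weighted_summable:
  assumes "\<And>j. 0 \<le> \<phi> j" "\<And>j. \<phi> j \<le> B" "in_l2 f"
  shows "(\<lambda>j. \<phi> j * (cmod (f j))\<^sup>2) summable_on UNIV"
proof (rule summable_on_comparison_test)
  show "(\<lambda>j. B * (cmod (f j))\<^sup>2) summable_on UNIV"
    using assms(3) unfolding in_l2_def by (rule summable_on_cmult_right)
  show "\<phi> j * (cmod (f j))\<^sup>2 \<le> B * (cmod (f j))\<^sup>2" for j
    using assms(2)[of j] by (simp add: mult_right_mono)
qed (use assms(1) in auto)

lemma weighted_re_summable:
  assumes "\<And>j. 0 \<le> \<phi> j" "\<And>j. \<phi> j \<le> B" "in_l2 f" "in_l2 g"
  shows "(\<lambda>j. 2 * \<phi> j * Re (cnj (f j) * g j)) summable_on UNIV"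
proof (rule real_summable_bound)
  show "(\<lambda>j. 2 * B * (cmod (f j) * cmod (g j))) summable_on UNIV"
    using prod_summable[OF assms(3,4)] by (rule summable_on_cmult_right)
  show "\<bar>2 * \<phi> j * Re (cnj (f j) * g j)\<bar> \<le> 2 * B * (cmod (f j) * cmod (g j))" for j
  proof -
    have "\<bar>2 * \<phi> j * Re (cnj (f j) * g j)\<bar> = 2 * \<phi> j * \<bar>Re (cnj (f j) * g j)\<bar>"
      using assms(1)[of j] by (simp add: abs_mult)
    also have "\<dots> \<le> 2 * B * (cmod (f j) * cmod (g j))"
      using assms(1,2)[of j] abs_re_cnj_le[of "f j" "g j"]
      by (intro mult_mono) auto
    finally show ?thesis .
  qed
qed

lemma infsum_lin3:
  fixes a b c :: "'i \<Rightarrow> real"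
  assumes "a summable_on A" "b summable_on A" "c summable_on A"
  shows "infsum (\<lambda>j. x * a j + y * b j + z * c j) A = x * infsum a A + y * infsum b A + z * infsum c A"
proof -
  have s1: "(\<lambda>j. x * a j) summable_on A" "(\<lambda>j. y * b j) summable_on A" "(\<lambda>j. z * c j) summable_on A"
    using assms by (auto intro: summable_on_cmult_right)
  have "infsum (\<lambda>j. x * a j + y * b j + z * c j) A
      = infsum (\<lambda>j. x * a j + y * b j) A + infsum (\<lambda>j. z * c j) A"
    by (rule infsum_add) (use s1 in \<open>auto intro: summable_on_add\<close>)
  also have "infsum (\<lambda>j. x * a j + y * b j) A = infsum (\<lambda>j. x * a j) A + infsum (\<lambda>j. y * b j) A"
    by (rule infsum_add) (use s1 in auto)
  finally show ?thesis by (simp add: infsum_cmult_right assms)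
qed

lemma alg_aux: fixes X Y P Q W r f :: real
  assumes "r \<noteq> 0" "X = Y + 2 * r * (P + Q) + r\<^sup>2 * W"
  shows "(1 / r) * (f * X) + (- 1 / r) * (f * Y) + (-1) * (2 * f * P) = 2 * f * Q + f * r * W"
  using assms by (simp add: field_simps power2_eq_square)

lemma weighted_deriv:
  fixes u u' :: "real \<Rightarrow> 'i \<Rightarrow> complex" and \<phi> :: "'i \<Rightarrow> real"
  assumes phi: "\<And>j. 0 \<le> \<phi> j" "\<And>j. \<phi> j \<le> B"
    and l2u: "\<And>t. t \<in> {0..1} \<Longrightarrow> in_l2 (u t)"
    and l2u': "\<And>t. t \<in> {0..1} \<Longrightarrow> in_l2 (u' t)"
    and dif: "((\<lambda>s. l2norm (\<lambda>j. (u s j - u t j) / complex_of_real (s - t) - u' t j)) \<longlongrightarrow> 0) (at t within {0..1})"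
    and t: "t \<in> {0..1}"
  shows "((\<lambda>s. infsum (\<lambda>j. \<phi> j * (cmod (u s j))\<^sup>2) UNIV) has_real_derivative
          infsum (\<lambda>j. 2 * \<phi> j * Re (cnj (u t j) * u' t j)) UNIV) (at t within {0..1})"
proof -
  define E where "E s = infsum (\<lambda>j. \<phi> j * (cmod (u s j))\<^sup>2) UNIV" for s
  define D where "D = infsum (\<lambda>j. 2 * \<phi> j * Re (cnj (u t j) * u' t j)) UNIV"
  define q where "q s j = (u s j - u t j) / complex_of_real (s - t) - u' t j" for s j
  define g where "g s = 2 * B * sqrt (NN (u t)) * l2norm (q s) + B * \<bar>s - t\<bar> * (2 * NN (u' t) + 2 * (l2norm (q s))\<^sup>2)" for s
  have B0: "B \<ge> 0" using phi[of undefined] by linarith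
  have gl: "(g \<longlongrightarrow> 0) (at t within {0..1})"
  proof -
    have dq: "((\<lambda>s. l2norm (q s)) \<longlongrightarrow> 0) (at t within {0..1})" using dif unfolding q_def .
    have dt: "((\<lambda>s. \<bar>s - t\<bar>) \<longlongrightarrow> 0) (at t within {0..1})"
      by (rule tendsto_eq_intros | simp)+
    have "(g \<longlongrightarrow> 2 * B * sqrt (NN (u t)) * 0 + B * 0 * (2 * NN (u' t) + 2 * 0\<^sup>2)) (at t within {0..1})"
      unfolding g_def by (intro tendsto_intros dq dt)
    thus ?thesis by simp
  qed
  have ev: "\<forall>\<^sub>F s in at t within {0..1}. norm ((E s - E t) / (s - t) - D) \<le> g s"
    unfolding eventually_at
  proof (rule exI[of _ 1], intro conjI)
    show "(1::real) > 0" by simp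
    show "\<forall>s\<in>{0..1}. s \<noteq> t \<and> dist s t < 1 \<longrightarrow> norm ((E s - E t) / (s - t) - D) \<le> g s"
    proof (intro ballI impI)
      fix s assume s: "s \<in> {0..1}" and st: "s \<noteq> t \<and> dist s t < 1"
      have ne: "s - t \<noteq> 0" using st by simp
      have ql2: "in_l2 (q s)"
      proof -
        define c where "c = inverse (complex_of_real (s - t))"
        have "in_l2 (\<lambda>j. c * u s j + (- c) * u t j)"
          by (rule in_l2_lin) (use l2u s t in auto)
        hence "in_l2 (\<lambda>j. 1 * (c * u s j + (- c) * u t j) + (-1) * u' t j)"
          by (rule in_l2_lin) (use l2u' t in auto)
        thus ?thesis by (rule in_l2_cong) (auto simp: q_def c_def divide_inverse algebra_simps)
      qed
      define F where "F j = (1 / (s - t)) * (\<phi> j * (cmod (u s j))\<^sup>2) + (- 1 / (s - t)) * (\<phi> j * (cmod (u t j))\<^sup>2)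
                            + (-1) * (2 * \<phi> j * Re (cnj (u t j) * u' t j))" for j
      have FE: "infsum F UNIV = (E s - E t) / (s - t) - D"
      proof -
        have s1: "(\<lambda>j. \<phi> j * (cmod (u s j))\<^sup>2) summable_on UNIV"
          by (rule weighted_summable[OF phi l2u[OF s]])
        have s2: "(\<lambda>j. \<phi> j * (cmod (u t j))\<^sup>2) summable_on UNIV"
          by (rule weighted_summable[OF phi l2u[OF t]])
        have s3: "(\<lambda>j. 2 * \<phi> j * Re (cnj (u t j) * u' t j)) summable_on UNIV"
          by (rule weighted_re_summable[OF phi l2u[OF t] l2u'[OF t]])
        have "infsum F UNIV = (1 / (s - t)) * E s + (- 1 / (s - t)) * E t + (-1) * D"
          unfolding F_def E_def D_def by (rule infsum_lin3[OF s1 s2 s3])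
        thus ?thesis by (simp add: diff_divide_distrib)
      qed
      have Fid: "F j = 2 * \<phi> j * Re (cnj (u t j) * q s j) + \<phi> j * (s - t) * (cmod (u' t j + q s j))\<^sup>2" for j
      proof -
        have us: "u s j = u t j + complex_of_real (s - t) * (u' t j + q s j)"
          unfolding q_def using ne by (simp add: field_simps)
        define a where "a = u t j"
        define w where "w = u' t j + q s j"
        define r where "r = s - t"
        have "(cmod (a + complex_of_real r * w))\<^sup>2 = (cmod a)\<^sup>2 + 2 * r * Re (cnj a * w) + r\<^sup>2 * (cmod w)\<^sup>2"
          by (simp add: cmod_power2 power2_sum power_mult_distrib algebra_simps)
        hence "(cmod (u s j))\<^sup>2 = (cmod (u t j))\<^sup>2 + 2 * (s - t) * Re (cnj (u t j) * (u' t j + q s j)) + (s - t)\<^sup>2 * (cmod (u' t j + q s j))\<^sup>2"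
          unfolding a_def w_def r_def us .
        moreover have "Re (cnj (u t j) * (u' t j + q s j)) = Re (cnj (u t j) * u' t j) + Re (cnj (u t j) * q s j)"
          by (simp add: algebra_simps)
        ultimately have "(cmod (u s j))\<^sup>2 = (cmod (u t j))\<^sup>2 + 2 * (s - t) * (Re (cnj (u t j) * u' t j) + Re (cnj (u t j) * q s j)) + (s - t)\<^sup>2 * (cmod (u' t j + q s j))\<^sup>2"
          by simp
        thus ?thesis unfolding F_def by (rule alg_aux[OF ne])
      qed
      define G where "G j = 2 * B * (cmod (u t j) * cmod (q s j)) + B * \<bar>s - t\<bar> * (2 * (cmod (u' t j))\<^sup>2 + 2 * (cmod (q s j))\<^sup>2)" for j
      have Gs: "G summable_on UNIV"
        unfolding G_def using l2u[OF t] l2u'[OF t] ql2 unfolding in_l2_def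
        by (intro summable_on_add summable_on_cmult_right prod_summable) (auto simp: in_l2_def)
      have FG: "\<bar>F j\<bar> \<le> G j" for j
      proof -
        have "\<bar>F j\<bar> \<le> \<bar>2 * \<phi> j * Re (cnj (u t j) * q s j)\<bar> + \<bar>\<phi> j * (s - t) * (cmod (u' t j + q s j))\<^sup>2\<bar>"
          unfolding Fid by (rule abs_triangle_ineq)
        also have "\<bar>2 * \<phi> j * Re (cnj (u t j) * q s j)\<bar> \<le> 2 * B * (cmod (u t j) * cmod (q s j))"
        proof -
          have "\<bar>2 * \<phi> j * Re (cnj (u t j) * q s j)\<bar> = 2 * \<phi> j * \<bar>Re (cnj (u t j) * q s j)\<bar>"
            using phi(1)[of j] by (simp add: abs_mult)
          also have "\<dots> \<le> 2 * B * (cmod (u t j) * cmod (q s j))"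
            using phi[of j] abs_re_cnj_le[of "u t j" "q s j"] by (intro mult_mono) auto
          finally show ?thesis .
        qed
        also have "\<bar>\<phi> j * (s - t) * (cmod (u' t j + q s j))\<^sup>2\<bar> \<le> B * \<bar>s - t\<bar> * (2 * (cmod (u' t j))\<^sup>2 + 2 * (cmod (q s j))\<^sup>2)"
        proof -
          have "\<bar>\<phi> j * (s - t) * (cmod (u' t j + q s j))\<^sup>2\<bar> = \<phi> j * \<bar>s - t\<bar> * (cmod (u' t j + q s j))\<^sup>2"
            using phi(1)[of j] by (simp add: abs_mult)
          also have "\<dots> \<le> B * \<bar>s - t\<bar> * (2 * (cmod (u' t j))\<^sup>2 + 2 * (cmod (q s j))\<^sup>2)"
            using phi[of j] cmod_add_sq_le[of "u' t j" "q s j"] by (intro mult_mono) auto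
          finally show ?thesis .
        qed
        finally show ?thesis unfolding G_def by simp
      qed
      have "\<bar>infsum F UNIV\<bar> \<le> infsum G UNIV" by (rule real_infsum_abs_bound[OF Gs]) (use FG in auto)
      also have "infsum G UNIV = 2 * B * infsum (\<lambda>j. cmod (u t j) * cmod (q s j)) UNIV
                   + B * \<bar>s - t\<bar> * (2 * NN (u' t) + 2 * NN (q s))"
      proof -
        have a1: "(\<lambda>j. cmod (u t j) * cmod (q s j)) summable_on UNIV" by (rule prod_summable) (use l2u[OF t] ql2 in auto)
        have a2: "(\<lambda>j. (cmod (u' t j))\<^sup>2) summable_on UNIV" using l2u'[OF t] unfolding in_l2_def .
        have a3: "(\<lambda>j. (cmod (q s j))\<^sup>2) summable_on UNIV" using ql2 unfolding in_l2_def .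
        have "infsum G UNIV = infsum (\<lambda>j. (2 * B) * (cmod (u t j) * cmod (q s j)) + (B * \<bar>s - t\<bar> * 2) * (cmod (u' t j))\<^sup>2 + (B * \<bar>s - t\<bar> * 2) * (cmod (q s j))\<^sup>2) UNIV"
          unfolding G_def by (rule infsum_cong) (simp add: algebra_simps)
        also have "\<dots> = (2 * B) * infsum (\<lambda>j. cmod (u t j) * cmod (q s j)) UNIV + (B * \<bar>s - t\<bar> * 2) * NN (u' t) + (B * \<bar>s - t\<bar> * 2) * NN (q s)"
          unfolding NN_def by (rule infsum_lin3[OF a1 a2 a3])
        finally show ?thesis by (simp add: algebra_simps)
      qed
      also have "\<dots> \<le> g s"
      proof -
        have "infsum (\<lambda>j. cmod (u t j) * cmod (q s j)) UNIV \<le> sqrt (NN (u t)) * l2norm (q s)"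
          using cauchy_schwarz_l2[OF l2u[OF t] ql2] unfolding l2norm_NN .
        hence "2 * B * infsum (\<lambda>j. cmod (u t j) * cmod (q s j)) UNIV \<le> 2 * B * (sqrt (NN (u t)) * l2norm (q s))"
          using B0 by (intro mult_left_mono) auto
        thus ?thesis unfolding g_def NN_eq_l2norm_sq[of "q s"] by (simp add: mult.assoc)
      qed
      finally show "norm ((E s - E t) / (s - t) - D) \<le> g s" using FE by simp
    qed
  qed
  have "((\<lambda>s. (E s - E t) / (s - t) - D) \<longlongrightarrow> 0) (at t within {0..1})"
    by (rule Lim_null_comparison[OF ev gl])
  hence "((\<lambda>s. (E s - E t) / (s - t)) \<longlongrightarrow> D) (at t within {0..1})"
    by (simp add: LIM_zero_iff)
  thus ?thesis unfolding has_field_derivative_iff E_def D_def .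
qed

lemma gronwall01:
  fixes E D :: "real \<Rightarrow> real" and K :: real
  assumes der: "\<And>t. t \<in> {0..1} \<Longrightarrow> (E has_real_derivative D t) (at t within {0..1})"
    and le: "\<And>t. t \<in> {0..1} \<Longrightarrow> D t \<le> K * E t"
    and t: "t \<in> {0..1}"
  shows "E t \<le> exp (K * t) * E 0"
proof -
  define g where "g x = exp (- K * x) * E x" for x
  have cont: "continuous_on {0..1} g"
  proof -
    have "continuous (at x within {0..1}) g" if "x \<in> {0..1}" for x
      unfolding g_def by (intro continuous_intros DERIV_continuous[OF der[OF that]])
    thus ?thesis using continuous_on_eq_continuous_within by blast
  qed
  have "g t \<le> g 0"
  proof (rule DERIV_nonpos_imp_decreasing_open[of 0 t g])
    show "0 \<le> t" using t by simp
    show "continuous_on {0..t} g" by (rule continuous_on_subset[OF cont]) (use t in auto)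
    fix x assume x: "0 < x" "x < t"
    hence x01: "x \<in> {0..1}" using t by auto
    have "at x within {0..1} = at x" using x t by (intro at_within_Icc_at) auto
    hence dE: "(E has_real_derivative D x) (at x)" using der[OF x01] by simp
    have "(g has_real_derivative (- K * exp (- K * x) * E x + exp (- K * x) * D x)) (at x)"
      unfolding g_def by (auto intro!: derivative_eq_intros dE)
    moreover have "- K * exp (- K * x) * E x + exp (- K * x) * D x \<le> 0"
    proof -
      have "- K * exp (- K * x) * E x + exp (- K * x) * D x = exp (- K * x) * (D x - K * E x)"
        by (simp add: algebra_simps)
      also have "\<dots> \<le> 0" using le[OF x01] by (simp add: mult_nonneg_nonpos)
      finally show ?thesis .
    qed
    ultimately show "\<exists>y. (g has_real_derivative y) (at x) \<and> y \<le> 0" by blast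
  qed
  hence "exp (- K * t) * E t \<le> E 0" unfolding g_def by simp
  hence "exp (K * t) * (exp (- K * t) * E t) \<le> exp (K * t) * E 0" by (simp add: mult_left_mono)
  thus ?thesis by (simp add: exp_minus field_simps)
qed




definition fN :: "real \<Rightarrow> real \<Rightarrow> int \<Rightarrow> real" where
  "fN lam N n = cosh (lam * min (real_of_int \<bar>n\<bar>) N)"

definition phiN :: "real \<Rightarrow> real \<Rightarrow> int ^ 'd::finite \<Rightarrow> real" where
  "phiN lam N j = (\<Prod>k\<in>UNIV. fN lam N (j $ k))"

lemma cosh_mono_abs: "\<bar>x\<bar> \<le> \<bar>y\<bar> \<Longrightarrow> cosh (x::real) \<le> cosh y"
  by (metis cosh_real_abs cosh_real_nonneg_le_iff abs_ge_zero)

lemma fN_ge1: "fN lam N n \<ge> 1" unfolding fN_def by (rule cosh_real_ge_1)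

lemma fN_le: "lam \<ge> 0 \<Longrightarrow> N \<ge> 0 \<Longrightarrow> fN lam N n \<le> cosh (lam * N)"
  unfolding fN_def by (rule cosh_mono_abs) (auto simp: abs_mult intro!: mult_left_mono)

lemma fN_le_cosh: "lam \<ge> 0 \<Longrightarrow> N \<ge> 0 \<Longrightarrow> fN lam N n \<le> cosh (lam * real_of_int n)"
  unfolding fN_def by (rule cosh_mono_abs) (auto simp: abs_mult intro!: mult_left_mono)

lemma fN_eq: "lam \<ge> 0 \<Longrightarrow> real_of_int \<bar>n\<bar> \<le> N \<Longrightarrow> fN lam N n = cosh (lam * real_of_int n)"
  unfolding fN_def by (metis cosh_real_abs abs_mult abs_of_nonneg min.absorb1 of_int_abs)

lemma fN_shift:
  assumes lam: "lam \<ge> 0" and N: "N \<ge> 0"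
  shows "fN lam N (n + 1) + fN lam N (n - 1) \<le> 2 * cosh lam * fN lam N n"
proof (cases "real_of_int \<bar>n\<bar> \<le> N")
  case True
  have "fN lam N (n + 1) + fN lam N (n - 1) \<le> cosh (lam * real_of_int (n + 1)) + cosh (lam * real_of_int (n - 1))"
    using fN_le_cosh[OF lam N, of "n+1"] fN_le_cosh[OF lam N, of "n-1"] by simp
  also have "\<dots> = 2 * cosh lam * cosh (lam * real_of_int n)"
    by (simp add: distrib_left right_diff_distrib cosh_add cosh_diff)
  also have "\<dots> = 2 * cosh lam * fN lam N n" using fN_eq[OF lam True] by simp
  finally show ?thesis .
next
  case False
  have eq: "fN lam N n = cosh (lam * N)" unfolding fN_def using False by simp
  have c1: "cosh lam \<ge> 1" by (rule cosh_real_ge_1)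
  have "fN lam N (n + 1) + fN lam N (n - 1) \<le> 2 * cosh (lam * N)"
    using fN_le[OF lam N, of "n+1"] fN_le[OF lam N, of "n-1"] by simp
  also have "\<dots> \<le> 2 * cosh lam * cosh (lam * N)"
    using c1 mult_right_mono[OF c1, of "cosh (lam * N)"] by simp
  finally show ?thesis using eq by simp
qed

lemma axis_comp: "(j + axis k c) $ l = j $ l + (if l = k then c else 0)"
  unfolding axis_def by simp

lemma axis_comp_minus: "(j - axis k c) $ l = j $ l - (if l = k then c else 0)"
  unfolding axis_def by simp

lemma phiN_split: "phiN lam N (j::int^'d::finite) = fN lam N (j $ k) * (\<Prod>l\<in>UNIV - {k}. fN lam N (j $ l))"
  unfolding phiN_def by (rule prod.remove) auto

lemma phiN_shift:
  assumes lam: "lam \<ge> 0" and N: "N \<ge> 0"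
  shows "phiN lam N (j + axis k 1) + phiN lam N (j - axis k 1) \<le> 2 * cosh lam * phiN lam N (j::int^'d::finite)"
proof -
  define P where "P = (\<Prod>l\<in>UNIV - {k}. fN lam N (j $ l))"
  have P0: "P \<ge> 0" unfolding P_def by (intro prod_nonneg) (use fN_ge1 in \<open>auto intro: order_trans[OF zero_le_one]\<close>)
  have p1: "(\<Prod>l\<in>UNIV - {k}. fN lam N ((j + axis k 1) $ l)) = P"
    unfolding P_def by (rule prod.cong) (auto simp: axis_def)
  have p2: "(\<Prod>l\<in>UNIV - {k}. fN lam N ((j - axis k 1) $ l)) = P"
    unfolding P_def by (rule prod.cong) (auto simp: axis_def)
  have e1: "phiN lam N (j + axis k 1) = fN lam N (j $ k + 1) * P"
    unfolding phiN_split[of _ _ _ k] p1 by simp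
  have e2: "phiN lam N (j - axis k 1) = fN lam N (j $ k - 1) * P"
    unfolding phiN_split[of _ _ _ k] p2 by simp
  have e3: "phiN lam N j = fN lam N (j $ k) * P"
    unfolding phiN_split[of _ _ _ k] P_def by simp
  have "phiN lam N (j + axis k 1) + phiN lam N (j - axis k 1) = (fN lam N (j $ k + 1) + fN lam N (j $ k - 1)) * P"
    unfolding e1 e2 by (simp add: algebra_simps)
  also have "\<dots> \<le> (2 * cosh lam * fN lam N (j $ k)) * P"
    by (rule mult_right_mono[OF fN_shift[OF lam N] P0])
  finally show ?thesis unfolding e3 by (simp add: mult.assoc)
qed

lemma phiN_pos: "phiN lam N j \<ge> 1"
  unfolding phiN_def by (rule prod_ge_1) (use fN_ge1 in auto)

lemma phiN_bound: "lam \<ge> 0 \<Longrightarrow> N \<ge> 0 \<Longrightarrow> phiN lam N (j::int^'d::finite) \<le> cosh (lam * N) ^ CARD('d)"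
  unfolding phiN_def
  using prod_mono[of UNIV "\<lambda>k. fN lam N (j $ k)" "\<lambda>k. cosh (lam * N)"] fN_le fN_ge1
  by (simp add: order_trans[OF zero_le_one])

lemma infsum_finsum:
  fixes f :: "'k \<Rightarrow> 'i \<Rightarrow> real"
  assumes "finite S" "\<And>k. k \<in> S \<Longrightarrow> f k summable_on A"
  shows "(\<lambda>j. \<Sum>k\<in>S. f k j) summable_on A \<and> infsum (\<lambda>j. \<Sum>k\<in>S. f k j) A = (\<Sum>k\<in>S. infsum (f k) A)"
  using assms
proof (induction S rule: finite_induct)
  case empty
  then show ?case by simp
next
  case (insert x F)
  hence IH: "(\<lambda>j. \<Sum>k\<in>F. f k j) summable_on A" "infsum (\<lambda>j. \<Sum>k\<in>F. f k j) A = (\<Sum>k\<in>F. infsum (f k) A)"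
    by auto
  have fx: "f x summable_on A" using insert by auto
  show ?case using insert.hyps IH fx
    by (simp add: infsum_add summable_on_add)
qed

lemma shift_reindex:
  fixes u :: "int^'d::finite \<Rightarrow> complex" and \<phi> :: "int^'d \<Rightarrow> real"
  assumes "\<And>j. 0 \<le> \<phi> j" "\<And>j. \<phi> j \<le> B" "in_l2 u"
  shows "(\<lambda>j. \<phi> j * (cmod (u (j + a)))\<^sup>2) summable_on UNIV"
    "infsum (\<lambda>j. \<phi> j * (cmod (u (j + a)))\<^sup>2) UNIV = infsum (\<lambda>i. \<phi> (i - a) * (cmod (u i))\<^sup>2) UNIV"
proof -
  have bij: "bij_betw (\<lambda>i. i - a) UNIV UNIV"
    by (rule bij_betwI[where g = "\<lambda>i. i + a"]) auto
  have s: "(\<lambda>i. \<phi> (i - a) * (cmod (u i))\<^sup>2) summable_on UNIV"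
    by (rule weighted_summable) (use assms in auto)
  have eq: "(\<lambda>i. (\<lambda>j. \<phi> j * (cmod (u (j + a)))\<^sup>2) (i - a)) = (\<lambda>i. \<phi> (i - a) * (cmod (u i))\<^sup>2)"
    by simp
  show "(\<lambda>j. \<phi> j * (cmod (u (j + a)))\<^sup>2) summable_on UNIV"
    using summable_on_reindex_bij_betw[OF bij, of "\<lambda>j. \<phi> j * (cmod (u (j + a)))\<^sup>2"] s eq by simp
  show "infsum (\<lambda>j. \<phi> j * (cmod (u (j + a)))\<^sup>2) UNIV = infsum (\<lambda>i. \<phi> (i - a) * (cmod (u i))\<^sup>2) UNIV"
    using infsum_reindex_bij_betw[OF bij, of "\<lambda>j. \<phi> j * (cmod (u (j + a)))\<^sup>2"] eq by simp
qed

lemma re_cnj_self: "Re (cnj a * a) = (cmod a)\<^sup>2"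
  using cmod_power2[of a] by (simp add: power2_eq_square)

lemma pointwise_lap:
  fixes u :: "int^'d::finite \<Rightarrow> complex"
  assumes h: "h > 0" and \<phi>0: "\<phi> j \<ge> 0" and VL: "\<bar>V j\<bar> \<le> L"
  shows "2 * \<phi> j * Re (cnj (u j) * (disc_lap h u j + complex_of_real (V j) * u j))
    \<le> 2 * L * (\<phi> j * (cmod (u j))\<^sup>2)
       + (1 / h\<^sup>2) * (\<Sum>k\<in>UNIV. \<phi> j * (cmod (u (j + axis k 1)))\<^sup>2 + \<phi> j * (cmod (u (j + - axis k 1)))\<^sup>2)
       + (- (2 * real CARD('d) / h\<^sup>2)) * (\<phi> j * (cmod (u j))\<^sup>2)"
proof -
  define T where "T k = u (j + axis k 1) - 2 * u j + u (j - axis k 1)" for k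
  have lapeq: "Re (cnj (u j) * disc_lap h u j) = (1 / h\<^sup>2) * (\<Sum>k\<in>UNIV. Re (cnj (u j) * T k))"
  proof -
    have "cnj (u j) * disc_lap h u j = complex_of_real (1 / h\<^sup>2) * (\<Sum>k\<in>UNIV. cnj (u j) * T k)"
      unfolding disc_lap_def T_def by (simp add: sum_distrib_left algebra_simps)
    thus ?thesis by (simp add: Re_sum)
  qed
  have trm: "2 * \<phi> j * Re (cnj (u j) * T k) \<le> \<phi> j * (cmod (u (j + axis k 1)))\<^sup>2 + \<phi> j * (cmod (u (j + - axis k 1)))\<^sup>2 - 2 * (\<phi> j * (cmod (u j))\<^sup>2)" for k
  proof -
    have "Re (cnj (u j) * T k) = Re (cnj (u j) * u (j + axis k 1)) + Re (cnj (u j) * u (j - axis k 1)) - 2 * Re (cnj (u j) * u j)"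
      unfolding T_def by (simp add: algebra_simps)
    moreover have "2 * Re (cnj (u j) * u (j + axis k 1)) \<le> (cmod (u j))\<^sup>2 + (cmod (u (j + axis k 1)))\<^sup>2" by (rule re_cnj_le)
    moreover have "2 * Re (cnj (u j) * u (j - axis k 1)) \<le> (cmod (u j))\<^sup>2 + (cmod (u (j - axis k 1)))\<^sup>2" by (rule re_cnj_le)
    ultimately have "2 * Re (cnj (u j) * T k) \<le> (cmod (u (j + axis k 1)))\<^sup>2 + (cmod (u (j - axis k 1)))\<^sup>2 - 2 * (cmod (u j))\<^sup>2"
      using re_cnj_self[of "u j"] by linarith
    hence "\<phi> j * (2 * Re (cnj (u j) * T k)) \<le> \<phi> j * ((cmod (u (j + axis k 1)))\<^sup>2 + (cmod (u (j - axis k 1)))\<^sup>2 - 2 * (cmod (u j))\<^sup>2)"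
      using \<phi>0 by (rule mult_left_mono)
    thus ?thesis by (simp add: algebra_simps)
  qed
  have "2 * \<phi> j * Re (cnj (u j) * disc_lap h u j) = (1 / h\<^sup>2) * (\<Sum>k\<in>UNIV. 2 * \<phi> j * Re (cnj (u j) * T k))"
    unfolding lapeq by (simp add: sum_distrib_left algebra_simps)
  also have "\<dots> \<le> (1 / h\<^sup>2) * (\<Sum>k\<in>UNIV. \<phi> j * (cmod (u (j + axis k 1)))\<^sup>2 + \<phi> j * (cmod (u (j + - axis k 1)))\<^sup>2 - 2 * (\<phi> j * (cmod (u j))\<^sup>2))"
    using h by (intro mult_left_mono sum_mono trm) auto
  also have "\<dots> = (1 / h\<^sup>2) * (\<Sum>k\<in>UNIV. \<phi> j * (cmod (u (j + axis k 1)))\<^sup>2 + \<phi> j * (cmod (u (j + - axis k 1)))\<^sup>2)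
       + (- (2 * real CARD('d) / h\<^sup>2)) * (\<phi> j * (cmod (u j))\<^sup>2)"
    by (simp add: sum_subtractf algebra_simps)
  finally have A: "2 * \<phi> j * Re (cnj (u j) * disc_lap h u j) \<le> \<dots>" .
  have "2 * \<phi> j * Re (cnj (u j) * (complex_of_real (V j) * u j)) = 2 * V j * (\<phi> j * (cmod (u j))\<^sup>2)"
    by (simp add: re_cnj_self[symmetric] algebra_simps)
  also have "\<dots> \<le> 2 * L * (\<phi> j * (cmod (u j))\<^sup>2)"
    using VL \<phi>0 by (intro mult_right_mono) auto
  finally have B: "2 * \<phi> j * Re (cnj (u j) * (complex_of_real (V j) * u j)) \<le> 2 * L * (\<phi> j * (cmod (u j))\<^sup>2)" .
  have "2 * \<phi> j * Re (cnj (u j) * (disc_lap h u j + complex_of_real (V j) * u j))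
      = 2 * \<phi> j * Re (cnj (u j) * disc_lap h u j) + 2 * \<phi> j * Re (cnj (u j) * (complex_of_real (V j) * u j))"
    by (simp add: algebra_simps)
  thus ?thesis using A B by linarith
qed

lemma lap_energy:
  fixes u :: "int^'d::finite \<Rightarrow> complex" and V :: "int^'d \<Rightarrow> real" and \<phi> :: "int^'d \<Rightarrow> real"
  assumes \<phi>0: "\<And>j. 0 \<le> \<phi> j" and \<phi>B: "\<And>j. \<phi> j \<le> B"
    and sh: "\<And>j k. \<phi> (j + axis k 1) + \<phi> (j - axis k 1) \<le> 2 * c * \<phi> j"
    and l2: "in_l2 u" and VL: "\<And>j. \<bar>V j\<bar> \<le> L" and h: "h > 0"
    and l2lap: "in_l2 (\<lambda>j. disc_lap h u j + complex_of_real (V j) * u j)"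
  shows "infsum (\<lambda>j. 2 * \<phi> j * Re (cnj (u j) * (disc_lap h u j + complex_of_real (V j) * u j))) UNIV
         \<le> (2 * L + 2 * real CARD('d) * (c - 1) / h\<^sup>2) * infsum (\<lambda>j. \<phi> j * (cmod (u j))\<^sup>2) UNIV"
proof -
  define d where "d = real CARD('d)"
  define X where "X j = \<phi> j * (cmod (u j))\<^sup>2" for j
  define S where "S k j = \<phi> j * (cmod (u (j + axis k 1)))\<^sup>2 + \<phi> j * (cmod (u (j + - axis k 1)))\<^sup>2" for k j
  define E where "E = infsum X UNIV"
  have Xs: "X summable_on UNIV" unfolding X_def by (rule weighted_summable[OF \<phi>0 \<phi>B l2])
  have Ss: "S k summable_on UNIV" for k
    unfolding S_def by (intro summable_on_add shift_reindex[OF \<phi>0 \<phi>B l2])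
  have Sk: "infsum (S k) UNIV \<le> 2 * c * E" for k
  proof -
    have "infsum (S k) UNIV = infsum (\<lambda>j. \<phi> j * (cmod (u (j + axis k 1)))\<^sup>2) UNIV + infsum (\<lambda>j. \<phi> j * (cmod (u (j + - axis k 1)))\<^sup>2) UNIV"
      unfolding S_def by (intro infsum_add shift_reindex[OF \<phi>0 \<phi>B l2])
    also have "\<dots> = infsum (\<lambda>i. \<phi> (i - axis k 1) * (cmod (u i))\<^sup>2) UNIV + infsum (\<lambda>i. \<phi> (i + axis k 1) * (cmod (u i))\<^sup>2) UNIV"
      using shift_reindex(2)[OF \<phi>0 \<phi>B l2, where a="axis k 1"] shift_reindex(2)[OF \<phi>0 \<phi>B l2, where a="- axis k 1"] by simp
    also have "\<dots> = infsum (\<lambda>i. (\<phi> (i + axis k 1) + \<phi> (i - axis k 1)) * (cmod (u i))\<^sup>2) UNIV"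
    proof -
      have a1: "(\<lambda>i. \<phi> (i - axis k 1) * (cmod (u i))\<^sup>2) summable_on UNIV"
        by (rule weighted_summable) (use \<phi>0 \<phi>B l2 in auto)
      have a2: "(\<lambda>i. \<phi> (i + axis k 1) * (cmod (u i))\<^sup>2) summable_on UNIV"
        by (rule weighted_summable) (use \<phi>0 \<phi>B l2 in auto)
      show ?thesis using infsum_add[OF a1 a2] by (simp add: algebra_simps)
    qed
    also have "\<dots> \<le> infsum (\<lambda>i. (2 * c) * X i) UNIV"
    proof (rule infsum_mono)
      show "(\<lambda>i. (\<phi> (i + axis k 1) + \<phi> (i - axis k 1)) * (cmod (u i))\<^sup>2) summable_on UNIV"
      proof (rule weighted_summable[where B = "2 * B"])
        show "\<phi> (i + axis k 1) + \<phi> (i - axis k 1) \<le> 2 * B" for i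
          using \<phi>B[of "i + axis k 1"] \<phi>B[of "i - axis k 1"] by linarith
      qed (use \<phi>0 l2 in \<open>auto intro: add_nonneg_nonneg\<close>)
      show "(\<lambda>i. (2 * c) * X i) summable_on UNIV" using Xs by (rule summable_on_cmult_right)
      show "(\<phi> (i + axis k 1) + \<phi> (i - axis k 1)) * (cmod (u i))\<^sup>2 \<le> 2 * c * X i" for i
        unfolding X_def using mult_right_mono[OF sh[of i k], of "(cmod (u i))\<^sup>2"] by (simp add: mult.assoc)
    qed
    also have "\<dots> = 2 * c * E" unfolding E_def by (rule infsum_cmult_right) (use Xs in auto)
    finally show ?thesis .
  qed
  have Ysum: "(\<lambda>j. \<Sum>k\<in>UNIV. S k j) summable_on UNIV \<and> infsum (\<lambda>j. \<Sum>k\<in>UNIV. S k j) UNIV = (\<Sum>k\<in>UNIV. infsum (S k) UNIV)"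
    by (rule infsum_finsum) (use Ss in auto)
  have Yb: "infsum (\<lambda>j. \<Sum>k\<in>UNIV. S k j) UNIV \<le> d * (2 * c * E)"
  proof -
    have "(\<Sum>k\<in>(UNIV::'d set). infsum (S k) UNIV) \<le> (\<Sum>k\<in>(UNIV::'d set). 2 * c * E)"
      by (rule sum_mono) (rule Sk)
    thus ?thesis using Ysum unfolding d_def by simp
  qed
  define P where "P j = 2 * L * X j + (1 / h\<^sup>2) * (\<Sum>k\<in>UNIV. S k j) + (- (2 * d / h\<^sup>2)) * X j" for j
  have Ps: "P summable_on UNIV" unfolding P_def
    using Xs Ysum by (intro summable_on_add summable_on_cmult_right) auto
  have PE: "infsum P UNIV = 2 * L * E + (1 / h\<^sup>2) * infsum (\<lambda>j. \<Sum>k\<in>UNIV. S k j) UNIV + (- (2 * d / h\<^sup>2)) * E"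
    unfolding P_def E_def using Ysum by (intro infsum_lin3 Xs) auto
  have "infsum (\<lambda>j. 2 * \<phi> j * Re (cnj (u j) * (disc_lap h u j + complex_of_real (V j) * u j))) UNIV \<le> infsum P UNIV"
  proof (rule infsum_mono[OF _ Ps])
    show "(\<lambda>j. 2 * \<phi> j * Re (cnj (u j) * (disc_lap h u j + complex_of_real (V j) * u j))) summable_on UNIV"
      by (rule weighted_re_summable[OF \<phi>0 \<phi>B l2 l2lap])
    show "2 * \<phi> j * Re (cnj (u j) * (disc_lap h u j + complex_of_real (V j) * u j)) \<le> P j" for j
      unfolding P_def X_def S_def d_def by (rule pointwise_lap[OF h \<phi>0 VL])
  qed
  also have "\<dots> \<le> 2 * L * E + (1 / h\<^sup>2) * (d * (2 * c * E)) + (- (2 * d / h\<^sup>2)) * E"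
    unfolding PE using Yb h by (simp add: divide_right_mono)
  also have "\<dots> = (2 * L + 2 * d * (c - 1) / h\<^sup>2) * E" using h by (simp add: field_simps)
  finally show ?thesis unfolding E_def X_def d_def .
qed

lemma energy_bound:
  fixes u :: "real \<Rightarrow> int^'d::finite \<Rightarrow> complex" and V :: "real \<Rightarrow> int^'d \<Rightarrow> real"
  assumes sol: "is_C1_l2_solution h V u" and h: "h > 0"
    and VL: "\<And>t j. t \<in> {0..1} \<Longrightarrow> \<bar>V t j\<bar> \<le> L"
    and lam: "lam \<ge> 0" and N: "N \<ge> 0"
    and t: "t \<in> {0..1}"
  shows "infsum (\<lambda>j. phiN lam N j * (cmod (u t j))\<^sup>2) UNIV
         \<le> exp ((2 * L + 2 * real CARD('d) * (cosh lam - 1) / h\<^sup>2) * t) * infsum (\<lambda>j. phiN lam N j * (cmod (u 0 j))\<^sup>2) UNIV"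
proof -
  obtain u' where l2: "\<And>t. t \<in> {0..1} \<Longrightarrow> in_l2 (u t) \<and> in_l2 (u' t)"
    and dif: "\<And>t. t \<in> {0..1} \<Longrightarrow> ((\<lambda>s. l2norm (\<lambda>j. (u s j - u t j) / complex_of_real (s - t) - u' t j)) \<longlongrightarrow> 0) (at t within {0..1})"
    and eq: "\<And>t j. t \<in> {0..1} \<Longrightarrow> u' t j = disc_lap h (u t) j + complex_of_real (V t j) * u t j"
    using sol unfolding is_C1_l2_solution_def by blast
  define B where "B = cosh (lam * N) ^ CARD('d)"
  have \<phi>0: "\<And>j. 0 \<le> phiN lam N (j::int^'d)" using phiN_pos order_trans[OF zero_le_one] by blast
  have \<phi>B: "\<And>j. phiN lam N (j::int^'d) \<le> B" unfolding B_def by (rule phiN_bound[OF lam N])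
  define K where "K = 2 * L + 2 * real CARD('d) * (cosh lam - 1) / h\<^sup>2"
  show ?thesis unfolding K_def[symmetric]
  proof (rule gronwall01[OF _ _ t])
    fix s :: real assume s: "s \<in> {0..1}"
    show "((\<lambda>s. infsum (\<lambda>j. phiN lam N j * (cmod (u s j))\<^sup>2) UNIV) has_real_derivative
          infsum (\<lambda>j. 2 * phiN lam N j * Re (cnj (u s j) * u' s j)) UNIV) (at s within {0..1})"
    proof -
      have l2u: "\<And>t. t \<in> {0..1} \<Longrightarrow> in_l2 (u t)" and l2u': "\<And>t. t \<in> {0..1} \<Longrightarrow> in_l2 (u' t)"
        using l2 by auto
      show ?thesis by (rule weighted_deriv[where \<phi>="phiN lam N" and B=B and u=u and u'=u', OF \<phi>0 \<phi>B l2u l2u' dif[OF s] s])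
    qed
    have "infsum (\<lambda>j. 2 * phiN lam N j * Re (cnj (u s j) * u' s j)) UNIV
        = infsum (\<lambda>j. 2 * phiN lam N j * Re (cnj (u s j) * (disc_lap h (u s) j + complex_of_real (V s j) * u s j))) UNIV"
      using eq[OF s] by simp
    also have "\<dots> \<le> K * infsum (\<lambda>j. phiN lam N j * (cmod (u s j))\<^sup>2) UNIV"
      unfolding K_def
    proof (rule lap_energy[OF \<phi>0 \<phi>B phiN_shift[OF lam N]])
      show "in_l2 (u s)" using l2[OF s] by simp
      show "\<bar>V s j\<bar> \<le> L" for j using VL[OF s] .
      show "h > 0" by (rule h)
      show "in_l2 (\<lambda>j. disc_lap h (u s) j + complex_of_real (V s j) * u s j)"
      proof -
        have "(\<lambda>j. disc_lap h (u s) j + complex_of_real (V s j) * u s j) = u' s"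
          using eq[OF s] by (intro ext) simp
        thus ?thesis using l2[OF s] by simp
      qed
    qed
    finally show "infsum (\<lambda>j. 2 * phiN lam N j * Re (cnj (u s j) * u' s j)) UNIV
        \<le> K * infsum (\<lambda>j. phiN lam N j * (cmod (u s j))\<^sup>2) UNIV" .
  qed
qed




lemma coord_bound:
  fixes lam \<mu> z :: real and n :: int
  assumes lam: "lam > 0" and mu: "\<mu> > 0" and z: "z > 0"
  shows "cosh (lam * real_of_int n) \<le> (2 * exp (z * (cosh (2 * lam / \<mu>) - 1))) * (macdonaldK (real_of_int n * \<mu>) z / macdonaldK 0 z)"
proof -
  have a: "lam / \<mu> > 0" using lam mu by simp
  have r: "cosh (real_of_int n * \<mu> * (lam / \<mu>)) * exp (- z * (cosh (2 * (lam / \<mu>)) - 1)) / 2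
          \<le> macdonaldK (real_of_int n * \<mu>) z / macdonaldK 0 z"
    by (rule macK_ratio[OF z a])
  have e1: "real_of_int n * \<mu> * (lam / \<mu>) = lam * real_of_int n" using mu by simp
  have e2: "2 * (lam / \<mu>) = 2 * lam / \<mu>" by simp
  define c where "c = cosh (lam * real_of_int n)"
  define x where "x = z * (cosh (2 * lam / \<mu>) - 1)"
  define r0 where "r0 = macdonaldK (real_of_int n * \<mu>) z / macdonaldK 0 z"
  have "c * exp (- x) / 2 \<le> r0" using r unfolding e1 e2 c_def x_def r0_def by simp
  hence "c * exp (- x) \<le> 2 * r0" by simp
  hence "exp x * (c * exp (- x)) \<le> exp x * (2 * r0)" by (simp add: mult_left_mono)
  hence "c \<le> exp x * (2 * r0)" by (simp add: exp_minus field_simps)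
  thus ?thesis unfolding c_def x_def r0_def by (simp add: algebra_simps)
qed

lemma phi_le_W:
  fixes lam \<mu> z N :: real
  assumes lam: "lam > 0" and mu: "\<mu> > 0" and z: "z > 0" and N: "N \<ge> 0"
  shows "phiN lam N (j::int^'d::finite) \<le> (2 * exp (z * (cosh (2 * lam / \<mu>) - 1))) ^ CARD('d)
          * (\<Prod>k\<in>UNIV. macdonaldK (real_of_int (j $ k) * \<mu>) z / macdonaldK 0 z)"
proof -
  define c1 where "c1 = 2 * exp (z * (cosh (2 * lam / \<mu>) - 1))"
  have "phiN lam N j \<le> (\<Prod>k\<in>UNIV. c1 * (macdonaldK (real_of_int (j $ k) * \<mu>) z / macdonaldK 0 z))"
    unfolding phiN_def
  proof (rule prod_mono)
    fix k :: 'd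
    have "fN lam N (j $ k) \<le> cosh (lam * real_of_int (j $ k))" using fN_le_cosh lam N by simp
    also have "\<dots> \<le> c1 * (macdonaldK (real_of_int (j $ k) * \<mu>) z / macdonaldK 0 z)"
      unfolding c1_def by (rule coord_bound[OF lam mu z])
    finally show "0 \<le> fN lam N (j $ k) \<and> fN lam N (j $ k) \<le> c1 * (macdonaldK (real_of_int (j $ k) * \<mu>) z / macdonaldK 0 z)"
      using fN_ge1[of lam N "j $ k"] by simp
  qed
  also have "\<dots> = c1 ^ CARD('d) * (\<Prod>k\<in>UNIV. macdonaldK (real_of_int (j $ k) * \<mu>) z / macdonaldK 0 z)"
    by (simp only: prod.distrib prod_constant)
  finally show ?thesis unfolding c1_def .
qed

lemma cosh_ge_exp_abs_half: "exp \<bar>x\<bar> / 2 \<le> cosh (x::real)"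
  unfolding cosh_def by (cases "x \<ge> 0") (auto simp: divide_simps)

lemma lat_norm_le_sum: "lat_norm (j::int^'d::finite) \<le> (\<Sum>k\<in>UNIV. \<bar>real_of_int (j $ k)\<bar>)"
  using L2_set_le_sum_abs[of "\<lambda>k. real_of_int (j $ k)" UNIV] unfolding lat_norm_def L2_set_def by simp

lemma comp_le_lat_norm: "\<bar>real_of_int ((j::int^'d::finite) $ k)\<bar> \<le> lat_norm j"
proof -
  have "\<bar>real_of_int (j $ k)\<bar> \<le> L2_set (\<lambda>k. \<bar>real_of_int (j $ k)\<bar>) UNIV"
    by (rule member_le_L2_set) auto
  thus ?thesis unfolding lat_norm_def L2_set_def by simp
qed

lemma annulus_lower:
  fixes lam N \<rho> :: real
  assumes lam: "lam \<ge> 0" and N: "\<And>k. \<bar>real_of_int ((j::int^'d::finite) $ k)\<bar> \<le> N" and rho: "\<rho> \<le> lat_norm j"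
  shows "exp (lam * \<rho>) \<le> 2 ^ CARD('d) * phiN lam N j"
proof -
  have "exp (lam * \<rho>) \<le> exp (lam * (\<Sum>k\<in>UNIV. \<bar>real_of_int (j $ k)\<bar>))"
    using rho lat_norm_le_sum[of j] lam by (simp add: mult_left_mono)
  also have "\<dots> = (\<Prod>k\<in>UNIV. exp \<bar>lam * real_of_int (j $ k)\<bar>)"
    using lam by (simp add: exp_sum sum_distrib_left abs_mult)
  also have "\<dots> = 2 ^ CARD('d) * (\<Prod>k\<in>UNIV. exp \<bar>lam * real_of_int (j $ k)\<bar> / 2)"
    by (simp add: prod_dividef)
  also have "\<dots> \<le> 2 ^ CARD('d) * (\<Prod>k\<in>UNIV. fN lam N (j $ k))"
  proof -
    have "(\<Prod>k\<in>UNIV. exp \<bar>lam * real_of_int (j $ k)\<bar> / 2) \<le> (\<Prod>k\<in>UNIV. fN lam N (j $ k))"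
    proof (rule prod_mono)
      fix k :: 'd
      have "fN lam N (j $ k) = cosh (lam * real_of_int (j $ k))"
        by (rule fN_eq[OF lam]) (use N[of k] in simp)
      thus "0 \<le> exp \<bar>lam * real_of_int (j $ k)\<bar> / 2 \<and> exp \<bar>lam * real_of_int (j $ k)\<bar> / 2 \<le> fN lam N (j $ k)"
        using cosh_ge_exp_abs_half by simp
    qed
    thus ?thesis by simp
  qed
  finally show ?thesis unfolding phiN_def .
qed

theorem mainTheorem4:
  fixes u :: "real \<Rightarrow> real \<Rightarrow> int ^ 'd::finite \<Rightarrow> complex"
    and V :: "real \<Rightarrow> real \<Rightarrow> int ^ 'd \<Rightarrow> real"
    and \<mu> L A :: real
  assumes mu_pos: "\<mu> > 0"
    and sol: "\<And>h. h > 0 \<Longrightarrow> is_C1_l2_solution h (V h) (u h)"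
    and V_bdd: "\<And>h t j. h > 0 \<Longrightarrow> t \<in> {0..1} \<Longrightarrow> \<bar>V h t j\<bar> \<le> L"
    and weighted_summable: "\<And>h. h > 0 \<Longrightarrow>
      (\<lambda>j. h ^ CARD('d) * (\<Prod>k\<in>UNIV. macdonaldK (real_of_int (j $ k) * \<mu>) (2 / (exp 1 * h\<^sup>2))
                                       / macdonaldK 0 (2 / (exp 1 * h\<^sup>2)))
            * ((cmod (u h 0 j))\<^sup>2 + (cmod (u h 1 j))\<^sup>2)) summable_on UNIV"
    and weighted_bdd: "\<And>h. h > 0 \<Longrightarrow>
      h ^ CARD('d) * infsum (\<lambda>j. (\<Prod>k\<in>UNIV. macdonaldK (real_of_int (j $ k) * \<mu>) (2 / (exp 1 * h\<^sup>2))
                                       / macdonaldK 0 (2 / (exp 1 * h\<^sup>2)))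
            * ((cmod (u h 0 j))\<^sup>2 + (cmod (u h 1 j))\<^sup>2)) UNIV \<le> A"
  shows "\<exists>h0 > 0. \<exists>c0 > 0. \<exists>C > 0. \<forall>h R. 0 < h \<and> h < h0 \<and> R > 1 \<and> R * h \<ge> 2 / (exp 1 * \<mu>) \<longrightarrow>
      h ^ CARD('d) * integral {0..1} (\<lambda>t. \<Sum>j\<in>{j. R - 2 < h * lat_norm j \<and> h * lat_norm j < R + 1}.
                                           (cmod (u h t j))\<^sup>2)
      \<le> C * exp (- \<mu> * c0 * (R / h * ln (R * h) + R / h * ln \<mu>))"
proof -
  define d where "d = real CARD('d)"
  have d1: "d \<ge> 1" unfolding d_def by simp
  have L0: "L \<ge> 0" using V_bdd[of 1 0 undefined] by simp
  define m where "m = min 1 (\<mu> / 2)"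
  define a where "a = m / (2 * \<mu>)"
  define eps where "eps = min 1 (a / (3 * d))"
  define c0 where "c0 = a * eps / 2"
  define h0 where "h0 = 1 / (2 * exp 1 * \<mu>)"
  define C where "C = 4 ^ CARD('d) * exp (2 * L) * \<bar>A\<bar> + 1"
  have m0: "m > 0" unfolding m_def using mu_pos by simp
  have a0: "a > 0" unfolding a_def using m0 mu_pos by simp
  have eps0: "eps > 0" unfolding eps_def using a0 d1 by simp
  have c00: "c0 > 0" unfolding c0_def using a0 eps0 by simp
  have h00: "h0 > 0" unfolding h0_def using mu_pos by simp
  have C0: "C > 0" unfolding C_def by (simp add: add_nonneg_pos)
  have main: "h ^ CARD('d) * integral {0..1} (\<lambda>t. \<Sum>j\<in>{j. R - 2 < h * lat_norm j \<and> h * lat_norm j < R + 1}.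
                                           (cmod (u h t j))\<^sup>2)
      \<le> C * exp (- \<mu> * c0 * (R / h * ln (R * h) + R / h * ln \<mu>))"
    if h: "0 < h" "h < h0" and R: "R > 1" "R * h \<ge> 2 / (exp 1 * \<mu>)" for h R
  proof -
    define hd where "hd = h ^ CARD('d)"
    have hd0: "hd > 0" unfolding hd_def using h by simp
    define y where "y = R * h * \<mu>"
    have y0: "y > 0" unfolding y_def using h R mu_pos by simp
    have R4: "R \<ge> 4"
    proof -
      have "4 * h < 4 * h0" using h by simp
      also have "4 * h0 = 2 / (exp 1 * \<mu>)" unfolding h0_def by simp
      finally have "4 * h < R * h" using R by simp
      thus ?thesis using h by simp
    qed
    define sv where "sv = ln (1 + eps * y)"
    define lam where "lam = m * sv"
    have "eps * y > 0" using eps0 y0 by simp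
    hence "sv > 0" unfolding sv_def by simp
    hence lam0: "lam > 0" unfolding lam_def using m0 by simp
    define z where "z = 2 / (exp 1 * h\<^sup>2)"
    have z0: "z > 0" unfolding z_def using h by simp
    define N where "N = (R + 1) / h"
    have N0: "N \<ge> 0" unfolding N_def using h R by simp
    define K where "K = 2 * L + 2 * d * (cosh lam - 1) / h\<^sup>2"
    have K0: "K \<ge> 0" unfolding K_def using L0 d1 h cosh_real_ge_1[of lam] by simp
    define Mc where "Mc = (2 * exp (z * (cosh (2 * lam / \<mu>) - 1))) ^ CARD('d)"
    have Mc0: "Mc \<ge> 0" unfolding Mc_def by simp
    define Ann where "Ann = {j :: int^'d. R - 2 < h * lat_norm j \<and> h * lat_norm j < R + 1}"
    define Q where "Q = 2 ^ CARD('d) * exp (- lam * ((R - 2) / h)) * (exp K * (Mc * (\<bar>A\<bar> / hd)))"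
    have Q0: "Q \<ge> 0" unfolding Q_def using Mc0 hd0 by simp
    have sol_h: "is_C1_l2_solution h (V h) (u h)" using sol h by simp
    have l2u: "in_l2 (u h t)" if "t \<in> {0..1}" for t
      using sol_h that unfolding is_C1_l2_solution_def by blast
    have init: "infsum (\<lambda>j. phiN lam N j * (cmod (u h 0 j))\<^sup>2) UNIV \<le> Mc * (A / hd)"
    proof -
      define W where "W j = (\<Prod>k\<in>UNIV. macdonaldK (real_of_int (j $ k) * \<mu>) (2 / (exp 1 * h\<^sup>2))
                                       / macdonaldK 0 (2 / (exp 1 * h\<^sup>2)))" for j :: "int^'d"
      define st where "st j = (cmod (u h 0 j))\<^sup>2 + (cmod (u h 1 j))\<^sup>2" for j
      have ws: "(\<lambda>j. hd * W j * st j) summable_on UNIV"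
        using weighted_summable[OF h(1)] unfolding W_def st_def hd_def .
      have ws': "(\<lambda>j. W j * st j) summable_on UNIV"
      proof -
        have "(\<lambda>j. (1 / hd) * (hd * W j * st j)) summable_on UNIV" using ws by (rule summable_on_cmult_right)
        moreover have "(\<lambda>j. (1 / hd) * (hd * W j * st j)) = (\<lambda>j. W j * st j)" using hd0 by (intro ext) simp
        ultimately show ?thesis by simp
      qed
      have wb: "hd * infsum (\<lambda>j. W j * st j) UNIV \<le> A"
        using weighted_bdd[OF h(1)] unfolding W_def st_def hd_def .
      have pw: "phiN lam N j * (cmod (u h 0 j))\<^sup>2 \<le> Mc * (W j * st j)" for j
      proof -
        have p1: "phiN lam N j \<le> Mc * W j"
          using phi_le_W[OF lam0 mu_pos z0 N0, of j] unfolding Mc_def W_def z_def .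
        have "1 \<le> phiN lam N j" by (rule phiN_pos)
        hence MW: "Mc * W j \<ge> 0" using p1 by linarith
        have "phiN lam N j * (cmod (u h 0 j))\<^sup>2 \<le> (Mc * W j) * (cmod (u h 0 j))\<^sup>2"
          using p1 by (simp add: mult_right_mono)
        also have "\<dots> \<le> (Mc * W j) * st j" unfolding st_def using MW by (simp add: mult_left_mono)
        finally show ?thesis by (simp add: mult.assoc)
      qed
      have "infsum (\<lambda>j. phiN lam N j * (cmod (u h 0 j))\<^sup>2) UNIV \<le> infsum (\<lambda>j. Mc * (W j * st j)) UNIV"
      proof (rule infsum_mono[OF _ _ pw])
        show "(\<lambda>j. phiN lam N j * (cmod (u h 0 j))\<^sup>2) summable_on UNIV"
          by (rule Submission.weighted_summable[where B = "cosh (lam * N) ^ CARD('d)"])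
             (use phiN_pos phiN_bound[OF less_imp_le[OF lam0] N0] l2u[of 0] in \<open>auto intro: order_trans[OF zero_le_one]\<close>)
        show "(\<lambda>j. Mc * (W j * st j)) summable_on UNIV" using ws' by (rule summable_on_cmult_right)
      qed
      also have "\<dots> = Mc * infsum (\<lambda>j. W j * st j) UNIV" by (rule infsum_cmult_right) (use ws' in auto)
      also have "\<dots> \<le> Mc * (A / hd)"
      proof -
        have "infsum (\<lambda>j. W j * st j) UNIV \<le> A / hd" using wb hd0 by (simp add: field_simps)
        thus ?thesis using Mc0 by (rule mult_left_mono)
      qed
      finally show ?thesis .
    qed
    have pt: "(\<Sum>j\<in>Ann. (cmod (u h t j))\<^sup>2) \<le> Q" if t: "t \<in> {0..1}" for t
    proof (cases "finite Ann")
      case False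
      thus ?thesis using Q0 by simp
    next
      case True
      define c where "c = 2 ^ CARD('d) * exp (- lam * ((R - 2) / h))"
      have c0': "c \<ge> 0" unfolding c_def by simp
      have each: "(cmod (u h t j))\<^sup>2 \<le> c * (phiN lam N j * (cmod (u h t j))\<^sup>2)" if j: "j \<in> Ann" for j
      proof -
        have jl: "R - 2 < h * lat_norm j" "h * lat_norm j < R + 1" using j unfolding Ann_def by auto
        have "exp (lam * ((R - 2) / h)) \<le> 2 ^ CARD('d) * phiN lam N j"
        proof (rule annulus_lower)
          show "0 \<le> lam" using lam0 by simp
          show "\<bar>real_of_int (j $ k)\<bar> \<le> N" for k
          proof -
            have "lat_norm j < N" unfolding N_def using jl h by (simp add: field_simps)
            thus ?thesis using comp_le_lat_norm[of j k] by simp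
          qed
          show "(R - 2) / h \<le> lat_norm j" using jl h by (simp add: field_simps)
        qed
        hence A1: "exp (- (lam * ((R - 2) / h))) * exp (lam * ((R - 2) / h)) \<le> exp (- (lam * ((R - 2) / h))) * (2 ^ CARD('d) * phiN lam N j)"
          by (rule mult_left_mono) simp
        have A2: "exp (- (lam * ((R - 2) / h))) * exp (lam * ((R - 2) / h)) = 1"
          by (simp add: exp_minus)
        have A3: "exp (- (lam * ((R - 2) / h))) * (2 ^ CARD('d) * phiN lam N j) = c * phiN lam N j"
          unfolding c_def by (simp add: ac_simps)
        have "1 \<le> c * phiN lam N j" using A1 A2 A3 by linarith
        hence "1 * (cmod (u h t j))\<^sup>2 \<le> (c * phiN lam N j) * (cmod (u h t j))\<^sup>2"
          by (rule mult_right_mono) simp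
        thus ?thesis by (simp add: mult.assoc)
      qed
      have phs: "(\<lambda>j. phiN lam N j * (cmod (u h t j))\<^sup>2) summable_on UNIV"
        by (rule Submission.weighted_summable[where B = "cosh (lam * N) ^ CARD('d)"])
           (use phiN_pos phiN_bound[OF less_imp_le[OF lam0] N0] l2u[OF t] in \<open>auto intro: order_trans[OF zero_le_one]\<close>)
      have "(\<Sum>j\<in>Ann. (cmod (u h t j))\<^sup>2) \<le> (\<Sum>j\<in>Ann. c * (phiN lam N j * (cmod (u h t j))\<^sup>2))"
        by (rule sum_mono) (rule each)
      also have "\<dots> = c * (\<Sum>j\<in>Ann. phiN lam N j * (cmod (u h t j))\<^sup>2)" by (simp add: sum_distrib_left)
      also have "\<dots> \<le> c * infsum (\<lambda>j. phiN lam N j * (cmod (u h t j))\<^sup>2) UNIV"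
      proof -
        have "(\<Sum>j\<in>Ann. phiN lam N j * (cmod (u h t j))\<^sup>2) \<le> infsum (\<lambda>j. phiN lam N j * (cmod (u h t j))\<^sup>2) UNIV"
        proof (rule finite_sum_le_infsum[OF phs True])
          fix x :: "int^'d"
          have "0 \<le> phiN lam N x" using phiN_pos[of lam N x] by linarith
          thus "0 \<le> phiN lam N x * (cmod (u h t x))\<^sup>2" by simp
        qed simp
        thus ?thesis using c0' by (rule mult_left_mono)
      qed
      also have "\<dots> \<le> c * (exp (K * t) * infsum (\<lambda>j. phiN lam N j * (cmod (u h 0 j))\<^sup>2) UNIV)"
      proof -
        have "infsum (\<lambda>j. phiN lam N j * (cmod (u h t j))\<^sup>2) UNIV \<le> exp (K * t) * infsum (\<lambda>j. phiN lam N j * (cmod (u h 0 j))\<^sup>2) UNIV"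
          unfolding K_def d_def
          by (rule energy_bound[OF sol_h h(1) _ less_imp_le[OF lam0] N0 t]) (use V_bdd h in auto)
        thus ?thesis using c0' by (rule mult_left_mono)
      qed
      also have "\<dots> \<le> c * (exp K * (Mc * (\<bar>A\<bar> / hd)))"
      proof -
        have i0: "infsum (\<lambda>j. phiN lam N j * (cmod (u h 0 j))\<^sup>2) UNIV \<ge> 0"
        proof (rule infsum_nonneg)
          fix x :: "int^'d"
          have "0 \<le> phiN lam N x" using phiN_pos[of lam N x] by linarith
          thus "0 \<le> phiN lam N x * (cmod (u h 0 x))\<^sup>2" by simp
        qed
        have "K * t \<le> K * 1" using K0 t by (intro mult_left_mono) auto
        hence "exp (K * t) \<le> exp K" by simp
        moreover have "Mc * (A / hd) \<le> Mc * (\<bar>A\<bar> / hd)" using Mc0 hd0 by (intro mult_left_mono divide_right_mono) auto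
        ultimately have "exp (K * t) * infsum (\<lambda>j. phiN lam N j * (cmod (u h 0 j))\<^sup>2) UNIV \<le> exp K * (Mc * (\<bar>A\<bar> / hd))"
          using init i0 by (meson exp_ge_zero mult_mono order_trans)
        thus ?thesis using c0' by (rule mult_left_mono)
      qed
      also have "\<dots> = Q" unfolding Q_def c_def by simp
      finally show ?thesis .
    qed
    have int_le: "integral {0..1} (\<lambda>t. \<Sum>j\<in>Ann. (cmod (u h t j))\<^sup>2) \<le> Q"
    proof (cases "(\<lambda>t. \<Sum>j\<in>Ann. (cmod (u h t j))\<^sup>2) integrable_on {0..1}")
      case True
      have "integral {0..1} (\<lambda>t. \<Sum>j\<in>Ann. (cmod (u h t j))\<^sup>2) \<le> integral {0..1} (\<lambda>t::real. Q)"
      proof (rule Henstock_Kurzweil_Integration.integral_le)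
        show "(\<lambda>t. \<Sum>j\<in>Ann. (cmod (u h t j))\<^sup>2) integrable_on {0..1}" using True .
        show "(\<lambda>t::real. Q) integrable_on {0..1::real}" by (rule integrable_continuous_interval) (rule continuous_on_const)
        show "(\<Sum>j\<in>Ann. (cmod (u h t j))\<^sup>2) \<le> Q" if "t \<in> {0..1}" for t using pt that .
      qed
      thus ?thesis by simp
    next
      case False
      thus ?thesis using Q0 by (simp add: not_integrable_integral)
    qed
    have fin: "hd * Q \<le> C * exp (- \<mu> * c0 * (R / h * ln (R * h) + R / h * ln \<mu>))"
    proof -
      define X where "X = lam * ((R - 2) * h) - 2 * d * (cosh lam - 1) - (2 * d / exp 1) * (cosh (2 * lam / \<mu>) - 1)"
      have Xb: "c0 * (y * ln y) \<le> X"
      proof -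
        have H: "(R - 2) * h \<ge> y / (2 * \<mu>)"
        proof -
          have "y / (2 * \<mu>) = R * h / 2" unfolding y_def using mu_pos by simp
          also have "\<dots> \<le> (R - 2) * h" using R4 h by (simp add: field_simps)
          finally show ?thesis .
        qed
        have sv_eq: "sv = ln (1 + min 1 (min 1 (\<mu> / 2) / (2 * \<mu>) / (3 * d)) * y)"
          unfolding sv_def eps_def a_def m_def ..
        have lam_eq: "lam = min 1 (\<mu> / 2) * sv" unfolding lam_def m_def ..
        from final_ineq[OF mu_pos d1 y0 sv_eq lam_eq H]
        show ?thesis unfolding X_def c0_def a_def eps_def m_def .
      qed
      define a1 where "a1 = - lam * ((R - 2) / h)"
      define a2 where "a2 = 2 * d * (cosh lam - 1) / h\<^sup>2"
      define a3 where "a3 = d * (z * (cosh (2 * lam / \<mu>) - 1))"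
      have Mc_eq: "Mc = 2 ^ CARD('d) * exp a3"
        unfolding Mc_def a3_def d_def by (simp add: power_mult_distrib exp_of_nat_mult)
      have eK: "exp K = exp (2 * L) * exp a2" unfolding K_def a2_def by (simp add: exp_add)
      have hdQ: "hd * Q = (4 ^ CARD('d) * exp (2 * L) * \<bar>A\<bar>) * exp (a1 + a2 + a3)"
      proof -
        have "hd * Q = 2 ^ CARD('d) * 2 ^ CARD('d) * exp (2 * L) * \<bar>A\<bar> * (exp a1 * exp a2 * exp a3)"
          unfolding Q_def Mc_eq eK a1_def[symmetric] using hd0 by (simp add: field_simps)
        also have "2 ^ CARD('d) * 2 ^ CARD('d) = (4::real) ^ CARD('d)"
          by (simp add: power_mult_distrib[symmetric])
        finally show ?thesis by (simp add: exp_add mult.assoc)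
      qed
      have aX: "a1 + a2 + a3 = - X / h\<^sup>2"
        unfolding a1_def a2_def a3_def X_def z_def using h by (simp add: field_simps power2_eq_square)
      have tgt: "- \<mu> * c0 * (R / h * ln (R * h) + R / h * ln \<mu>) = - (c0 * (y * ln y)) / h\<^sup>2"
      proof -
        have "ln y = ln (R * h) + ln \<mu>" unfolding y_def using h R mu_pos by (simp add: ln_mult)
        thus ?thesis unfolding y_def using h by (simp add: field_simps power2_eq_square)
      qed
      have "exp (a1 + a2 + a3) \<le> exp (- \<mu> * c0 * (R / h * ln (R * h) + R / h * ln \<mu>))"
        unfolding aX tgt using Xb h by (simp add: divide_right_mono)
      hence "hd * Q \<le> (4 ^ CARD('d) * exp (2 * L) * \<bar>A\<bar>) * exp (- \<mu> * c0 * (R / h * ln (R * h) + R / h * ln \<mu>))"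
        unfolding hdQ by (rule mult_left_mono) simp
      also have "\<dots> \<le> C * exp (- \<mu> * c0 * (R / h * ln (R * h) + R / h * ln \<mu>))"
        unfolding C_def by (rule mult_right_mono) auto
      finally show ?thesis .
    qed
    have "hd * integral {0..1} (\<lambda>t. \<Sum>j\<in>Ann. (cmod (u h t j))\<^sup>2) \<le> hd * Q"
      using int_le hd0 by (simp add: mult_left_mono)
    with fin show ?thesis unfolding hd_def Ann_def by simp
  qed

  show ?thesis
    using main h00 c00 C0 by blast
qed


end
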